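(* Let $w$ be a primitive word over $\mathcal{A}=\{a_1<a_2<\dots<a_k\}$ that is $\pi$-clustering for $\mathcal{A}$ for some $\pi\in S_{\mathcal{A}}$. Let $a,b$ be distinct letters. (1) If $\mu\in S_{\mathcal{A}}$, then $\mu(w)$ is $\pi'$-clustering for $\mathcal{A}'=\{\mu(a_1)<\dots<\mu(a_k)\}$ for some $\pi'\in S_{\mathcal{A}'}$. (2) If $a\in\mathcal{A}$, $b=a_1$, $\pi^{-1}(a)=a_i$ and $\pi^{-1}(b)=a_{i+1}$ for some $1\le i<k$, then $\alpha_{a,b}(w)\in\mathcal{A}^*$ is $\pi'$-clustering for $\mathcal{A}$ for some $\pi'\in S_{\mathcal{A}}$. (3) If $a\in\mathcal{A}$, $b=a_k$, $\pi^{-1}(b)=a_i$ and $\pi^{-1}(a)=a_{i+1}$ for some $1\le i<k$, then $\alpha_{a,b}(w)\in\mathcal{A}^*$ is $\pi'$-clustering for $\mathcal{A}$ for some $\pi'\in S_{\mathcal{A}}$. (4) If $\pi^{-1}(b)=a_1$, $a=a_i$ and $b=a_{i+1}$ for some $1\le i<k$, then $\tilde{\alpha}_{a,b}(w)$ is $\pi'$-clustering for $\mathcal{A}'=\{a_i<a_1<\dots<a_{i-1}<a_{i+1}<\dots<a_k\}$ for some $\pi'\in S_{\mathcal{A}'}$. (5) If $\pi^{-1}(b)=a_k$, $b=a_i$ and $a=a_{i+1}$ for some $1\le i<k$, then $\tilde{\alpha}_{a,b}(w)$ is $\pi'$-clustering for $\mathcal{A}'=\{a_1<\dots<a_i<a_{i+2}<\dots<a_k<a_{i+1}\}$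 for some $\pi'\in S_{\mathcal{A}'}$. (6) If $a\in\mathcal{A}$ and $b\notin\mathcal{A}$, then $\alpha_{a,b}(w)$ is $\pi'$-clustering for $\mathcal{A}'=\{a_1<\dots<a_k<b\}$ for some $\pi'\in S_{\mathcal{A}'}$, and it is also $\pi''$-clustering for $\mathcal{A}''=\{b<a_1<\dots<a_k\}$ for some $\pi''\in S_{\mathcal{A}''}$. (7) If $\mathcal{B}=\{b_1<\dots<b_h\}$ is disjoint from $\mathcal{A}$, then $\iota_{\mathcal{A},\mathcal{B}}(w)$ is $\pi'$-clustering for $\mathcal{A}'=\{a_1<\dots<a_k<b_1<\dots<b_h\}$ for some $\pi'\in S_{\mathcal{A}'}$.
   Context: A word is primitive if it is not of the form $u^d$ with $d\ge2$. For an ordered alphabet $\mathcal{C}=\{c_1<\dots<c_m\}$ and a word $v$ of length $n$ over $\mathcal{C}$, $\mathrm{bwt}_{\mathcal{C}}(v)$ is the word formed by the last letters of the $n$ cyclic rotations of $v$ sorted lexicographically with respect to the order of $\mathcal{C}$. For $\tau\in S_{\mathcal{C}}$ (a permutation of $\mathcal{C}$), $v$ is $\tau$-clustering for $\mathcal{C}$ if $\mathrm{bwt}_{\mathcal{C}}(v)=\tau(c_1)^{k_1}\cdots\tau(c_m)^{k_m}$ with $k_i=|v|_{\tau(c_i)}$ (number of occurrences). A permutation $\mu$ acts on words letter by letter. For distinct letters $a,b$, $\alpha_{a,b}$ is the morphism $a\mapsto ab$, $c\mapsto c$ ($c\neq a$), and $\tilde{\alpha}_{a,b}$ is the morphism $a\mapsto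 ba$, $c\mapsto c$ ($c\neq a$). $\iota_{\mathcal{A},\mathcal{B}}$ is the inclusion $\mathcal{A}^*\to(\mathcal{A}\sqcup\mathcal{B})^*$. *)

theory Defs
  imports "HOL-Combinatorics.Permutations" "HOL-Library.List_Lexorder"
begin

text \<open>An ordered alphabet c_1 < ... < c_m is a distinct list C; the order on letters
is the position in C (rank = number of letters preceding it). Words are lists.\<close>

definition primitive :: "'a list \<Rightarrow> bool" where
  "primitive v \<longleftrightarrow> \<not> (\<exists>u d. d \<ge> 2 \<and> v = concat (replicate d u))"

text \<open>Lexicographic order of words with respect to the order of C: compare
the words after mapping each letter to its rank in C.\<close>
definition rotations :: "'a list \<Rightarrow> 'a list list" where
  "rotations v = map (\<lambda>i. rotate i v) [0..<length v]"

definition bwt :: "'a list \<Rightarrow> 'a list \<Rightarrow> 'a list" where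
  "bwt C v = map last (sort_key (\<lambda>r. map (\<lambda>c. length (takeWhile (\<lambda>x. x \<noteq> c) C)) r) (rotations v))"

definition clustering :: "'a list \<Rightarrow> ('a \<Rightarrow> 'a) \<Rightarrow> 'a list \<Rightarrow> bool" where
  "clustering C \<tau> v \<longleftrightarrow> set v \<subseteq> set C \<and> \<tau> permutes set C \<and>
     bwt C v = concat (map (\<lambda>c. replicate (count_list v (\<tau> c)) (\<tau> c)) C)"

definition alpha :: "'a \<Rightarrow> 'a \<Rightarrow> 'a list \<Rightarrow> 'a list" where
  "alpha a b v = concat (map (\<lambda>c. if c = a then [a, b] else [c]) v)"

definition alpha_tilde :: "'a \<Rightarrow> 'a \<Rightarrow> 'a list \<Rightarrow> 'a list" where
  "alpha_tilde a b v = concat (map (\<lambda>c. if c = a then [b, a] else [c]) v)"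

end

theory Submission
  imports Defs "HOL-Library.Multiset"
begin

definition rk :: "'a list \<Rightarrow> 'a \<Rightarrow> nat" where
  "rk C c = length (takeWhile (\<lambda>x. x \<noteq> c) C)"

lemma rk_nth: "distinct D \<Longrightarrow> j < length D \<Longrightarrow> rk D (D ! j) = j"
proof (induction D arbitrary: j)
  case Nil then show ?case by simp
next
  case (Cons x D) then show ?case
    by (cases j) (auto simp: rk_def)
qed

lemma rk_less: "c \<in> set D \<Longrightarrow> rk D c < length D"
  by (induction D) (auto simp: rk_def)

lemma nth_rk: "c \<in> set D \<Longrightarrow> D ! rk D c = c"
  by (induction D) (auto simp: rk_def)

lemma rk_inj: "c \<in> set D \<Longrightarrow> d \<in> set D \<Longrightarrow> rk D c = rk D d \<Longrightarrow> c = d"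
  by (metis nth_rk)

lemma rk_append: "c \<in> set X \<Longrightarrow> rk (X @ Y) c = rk X c"
  by (induction X) (auto simp: rk_def)

lemma rk_append2: "c \<notin> set X \<Longrightarrow> rk (X @ Y) c = length X + rk Y c"
  by (induction X) (auto simp: rk_def)

lemma rk_Cons_same: "rk (c # X) c = 0" by (simp add: rk_def)
lemma rk_Cons_other: "c \<noteq> x \<Longrightarrow> rk (x # X) c = Suc (rk X c)" by (simp add: rk_def)

definition isrot :: "'a list \<Rightarrow> 'a list \<Rightarrow> bool" where
  "isrot v x \<longleftrightarrow> (\<exists>p s. v = p @ s \<and> s \<noteq> [] \<and> x = s @ p)"

lemma set_rotations: "set (rotations v) = {x. isrot v x}"
proof -
  have "x \<in> set (rotations v) \<longleftrightarrow> isrot v x" for x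
  proof
    assume "x \<in> set (rotations v)"
    then obtain i where i: "i < length v" "x = rotate i v" by (auto simp: rotations_def)
    then have "x = drop i v @ take i v" by (simp add: rotate_drop_take)
    then show "isrot v x" unfolding isrot_def using i
      by (intro exI[of _ "take i v"] exI[of _ "drop i v"]) auto
  next
    assume "isrot v x"
    then obtain p s where ps: "v = p @ s" "s \<noteq> []" "x = s @ p" by (auto simp: isrot_def)
    then have "length p < length v" by simp
    moreover have "rotate (length p) v = x" using ps by (simp add: rotate_drop_take)
    ultimately show "x \<in> set (rotations v)" unfolding rotations_def by force
  qed
  then show ?thesis by auto
qed

lemma isrot_length: "isrot v x \<Longrightarrow> length x = length v"
  by (auto simp: isrot_def)
lemma isrot_mset: "isrot v x \<Longrightarrow> mset x = mset v"
  by (auto simp: isrot_def)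
lemma isrot_set: "isrot v x \<Longrightarrow> set x = set v"
  by (auto simp: isrot_def)
lemma isrot_ne: "isrot v x \<Longrightarrow> x \<noteq> []"
  by (auto simp: isrot_def)

lemma isrot_shift: "isrot w (f # y) \<Longrightarrow> isrot w (y @ [f])"
proof -
  assume "isrot w (f # y)"
  then obtain p s where ps: "w = p @ s" "s \<noteq> []" "f # y = s @ p" by (auto simp: isrot_def)
  then obtain s' where s': "s = f # s'" by (cases s) auto
  show ?thesis
  proof (cases "s' = []")
    case True
    then show ?thesis using ps s' unfolding isrot_def
      by (intro exI[of _ "[]"] exI[of _ w]) auto
  next
    case False
    then show ?thesis using ps s' unfolding isrot_def
      by (intro exI[of _ "p @ [f]"] exI[of _ s']) auto
  qed
qed

lemma map_last_rotations: "map last (rotations v) = rotate (length v - 1) v"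
proof (cases "v = []")
  case True then show ?thesis by (simp add: rotations_def)
next
  case False
  show ?thesis
  proof (rule nth_equalityI)
    show "length (map last (rotations v)) = length (rotate (length v - 1) v)"
      by (simp add: rotations_def)
    fix i assume "i < length (map last (rotations v))"
    then have i: "i < length v" by (simp add: rotations_def)
    have "last (rotate i v) = rotate i v ! (length v - 1)"
      using False by (simp add: last_conv_nth)
    also have "\<dots> = v ! ((i + (length v - 1)) mod length v)"
      using False by (simp add: nth_rotate)
    also have "\<dots> = rotate (length v - 1) v ! i"
      using i by (simp add: nth_rotate add.commute)
    finally show "map last (rotations v) ! i = rotate (length v - 1) v ! i"
      using i by (simp add: rotations_def)
  qed
qed

definition lt :: "('a \<Rightarrow> nat) \<Rightarrow> 'a list \<Rightarrow> 'a list \<Rightarrow> bool" where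
  "lt r x y \<longleftrightarrow> map r x < map r y"

definition CondD :: "('a \<Rightarrow> nat) \<Rightarrow> ('a \<Rightarrow> nat) \<Rightarrow> 'a list \<Rightarrow> bool" where
  "CondD r \<kappa> v \<longleftrightarrow> (\<forall>x y. isrot v x \<longrightarrow> isrot v y \<longrightarrow> lt r x y \<longrightarrow> \<kappa> (last x) \<le> \<kappa> (last y))"

lemma sorted_concat_rep: "sorted (map h xs) \<Longrightarrow> sorted (concat (map (\<lambda>x. replicate (g x) (h x)) xs))"
proof (induction xs)
  case Nil then show ?case by simp
next
  case (Cons x xs)
  then show ?case by (auto simp: sorted_append)
qed

lemma map_rk_self: "distinct C \<Longrightarrow> map (rk C) C = [0..<length C]"
  by (rule nth_equalityI) (auto simp: rk_nth)

lemma mset_T: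
  assumes "distinct D" "set v \<subseteq> set D"
  shows "mset (concat (map (\<lambda>c. replicate (count_list v c) c) D)) = mset v"
proof (rule multiset_eqI)
  fix y
  have "count (mset (concat (map (\<lambda>c. replicate (count_list v c) c) D))) y
        = sum_list (map (\<lambda>c. if c = y then count_list v y else 0) D)"
    by (induction D) (auto simp: count_mset)
  also have "\<dots> = (\<Sum>c\<in>set D. if c = y then count_list v y else 0)"
    using assms(1) by (simp add: sum_list_distinct_conv_sum_set)
  also have "\<dots> = count (mset v) y"
    using assms(2) by (auto simp: count_mset count_list_0_iff)
  finally show "count (mset (concat (map (\<lambda>c. replicate (count_list v c) c) D))) y = count (mset v) y" .
qed

lemma T_sort:
  assumes C: "distinct C" and v: "set v \<subseteq> set C" and t: "\<tau> permutes set C"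
  shows "concat (map (\<lambda>c. replicate (count_list v (\<tau> c)) (\<tau> c)) C)
         = sort_key (\<lambda>c. rk C (inv \<tau> c)) v" (is "?T = _")
proof -
  let ?k = "\<lambda>c. rk C (inv \<tau> c)"
  have eq: "?T = concat (map (\<lambda>c. replicate (count_list v c) c) (map \<tau> C))"
    by (simp add: comp_def)
  have dm: "distinct (map \<tau> C)" using C t
    by (simp add: distinct_map permutes_inj_on)
  have sm: "set (map \<tau> C) = set C" using t by (simp add: permutes_image)
  have m: "mset ?T = mset v" unfolding eq using mset_T[OF dm] v sm by simp
  have inj: "inj_on ?k (set v)"
  proof (rule inj_onI)
    fix x y assume xy: "x \<in> set v" "y \<in> set v" "?k x = ?k y"
    have "inv \<tau> x \<in> set C" "inv \<tau> y \<in> set C"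
      using xy v t by (auto simp: permutes_inv permutes_in_image)
    then have "inv \<tau> x = inv \<tau> y" using xy rk_inj by metis
    then show "x = y" using t by (metis permutes_inverses(1))
  qed
  have "map ?k ?T = concat (map (\<lambda>c. replicate (count_list v (\<tau> c)) (rk C c)) C)"
    using t by (simp add: map_concat comp_def permutes_inverses(2))
  moreover have "sorted \<dots>"
    by (rule sorted_concat_rep) (simp add: map_rk_self[OF C])
  ultimately have "sorted (map ?k ?T)" by simp
  then show ?thesis
    using sort_key_inj_key_eq[of v ?T ?k] m inj by simp
qed

lemma bwt_alt: "bwt C v = map last (sort_key (map (rk C)) (rotations v))"
  unfolding bwt_def rk_def by (simp add: comp_def)

lemma sorted_cond:
  assumes C: "distinct C" and v: "set v \<subseteq> set C"
  shows "sorted (map \<kappa> (map last (sort_key (map (rk C)) (rotations v)))) \<longleftrightarrow> CondD (rk C) \<kappa> v"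
proof -
  let ?L = "sort_key (map (rk C)) (rotations v)"
  have sL: "set ?L = {x. isrot v x}" by (simp add: set_rotations)
  have srt: "sorted (map (map (rk C)) ?L)" by simp
  have injk: "x = y" if "isrot v x" "isrot v y" "map (rk C) x = map (rk C) y" for x y
  proof (rule map_inj_on[OF that(3)])
    show "inj_on (rk C) (set x \<union> set y)"
      using that(1,2) v isrot_set rk_inj by (metis (no_types, lifting) Un_absorb inj_onI subsetD)
  qed
  show ?thesis
  proof
    assume S: "sorted (map \<kappa> (map last ?L))"
    show "CondD (rk C) \<kappa> v" unfolding CondD_def
    proof (intro allI impI)
      fix x y assume xy: "isrot v x" "isrot v y" "lt (rk C) x y"
      then have "x \<in> set ?L" "y \<in> set ?L" using sL by auto
      then obtain i j where ij: "i < length ?L" "j < length ?L" "?L ! i = x" "?L ! j = y"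
        by (metis in_set_conv_nth)
      have "i < j"
      proof (rule ccontr)
        assume "\<not> i < j"
        then have "map (rk C) (?L ! j) \<le> map (rk C) (?L ! i)"
          using srt ij sorted_iff_nth_mono[of "map (map (rk C)) ?L"] by auto
        then show False using xy(3) ij unfolding lt_def by auto
      qed
      then show "\<kappa> (last x) \<le> \<kappa> (last y)"
        using S ij sorted_iff_nth_mono[of "map \<kappa> (map last ?L)"] by auto
    qed
  next
    assume Cd: "CondD (rk C) \<kappa> v"
    show "sorted (map \<kappa> (map last ?L))"
      unfolding sorted_iff_nth_mono
    proof (intro allI impI)
      fix i j assume ij: "i \<le> j" "j < length (map \<kappa> (map last ?L))"
      then have ij': "i < length ?L" "j < length ?L" "i \<le> j" by auto
      have ri: "isrot v (?L ! i)" "isrot v (?L ! j)" using ij' sL nth_mem by blast+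
      have le: "map (rk C) (?L ! i) \<le> map (rk C) (?L ! j)"
        using srt ij' sorted_iff_nth_mono[of "map (map (rk C)) ?L"] by auto
      show "map \<kappa> (map last ?L) ! i \<le> map \<kappa> (map last ?L) ! j"
      proof (cases "map (rk C) (?L ! i) = map (rk C) (?L ! j)")
        case True
        then have "?L ! i = ?L ! j" using injk ri by blast
        then show ?thesis using ij' by simp
      next
        case False
        then have "lt (rk C) (?L ! i) (?L ! j)" using le unfolding lt_def by auto
        then show ?thesis using Cd ri ij' unfolding CondD_def by auto
      qed
    qed
  qed
qed

lemma clust_iff:
  assumes C: "distinct C"
  shows "clustering C \<tau> v \<longleftrightarrow> set v \<subseteq> set C \<and> \<tau> permutes set C \<and> CondD (rk C) (\<lambda>c. rk C (inv \<tau> c)) v"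
proof (cases "set v \<subseteq> set C \<and> \<tau> permutes set C")
  case False then show ?thesis unfolding clustering_def by auto
next
  case True
  let ?k = "\<lambda>c. rk C (inv \<tau> c)"
  let ?L = "sort_key (map (rk C)) (rotations v)"
  have v: "set v \<subseteq> set C" and t: "\<tau> permutes set C" using True by auto
  have mL: "mset (map last ?L) = mset v"
  proof -
    have "mset (map last ?L) = image_mset last (mset ?L)" by simp
    also have "\<dots> = image_mset last (mset (rotations v))" by simp
    also have "\<dots> = mset (map last (rotations v))" by simp
    also have "\<dots> = mset v"
      by (metis map_last_rotations append_take_drop_id mset_append rotate_drop_take union_commute)
    finally show ?thesis .
  qed
  have inj: "inj_on ?k (set (map last ?L))"
  proof (rule inj_onI)
    fix x y assume xy: "x \<in> set (map last ?L)" "y \<in> set (map last ?L)" "?k x = ?k y"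
    have "x \<in> set v" "y \<in> set v" using xy(1,2) mL by (metis mset_eq_setD)+
    then have "inv \<tau> x \<in> set C" "inv \<tau> y \<in> set C"
      using v t by (auto simp: permutes_inv permutes_in_image)
    then have "inv \<tau> x = inv \<tau> y" using xy rk_inj by metis
    then show "x = y" using t by (metis permutes_inverses(1))
  qed
  have "bwt C v = concat (map (\<lambda>c. replicate (count_list v (\<tau> c)) (\<tau> c)) C)
        \<longleftrightarrow> map last ?L = sort_key ?k v"
    by (simp add: bwt_alt T_sort[OF C v t])
  also have "\<dots> \<longleftrightarrow> sorted (map ?k (map last ?L))"
  proof
    assume "map last ?L = sort_key ?k v" then show "sorted (map ?k (map last ?L))" by simp
  next
    assume "sorted (map ?k (map last ?L))"
    then have "sort_key ?k (map last ?L) = map last ?L"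
      using sort_key_inj_key_eq[of "map last ?L" "map last ?L" ?k] inj by simp
    moreover have inj2: "inj_on ?k (set v)" using inj mL by (metis mset_eq_setD)
    ultimately show "map last ?L = sort_key ?k v"
      using sort_key_inj_key_eq[of v "map last ?L" ?k] mL \<open>sorted (map ?k (map last ?L))\<close> by simp
  qed
  also have "\<dots> \<longleftrightarrow> CondD (rk C) ?k v" by (rule sorted_cond[OF C v])
  finally show ?thesis unfolding clustering_def using True by simp
qed

definition plist :: "'a list \<Rightarrow> 'a list \<Rightarrow> 'a \<Rightarrow> 'a" where
  "plist C D = (\<lambda>x. if x \<in> set C then D ! rk C x else x)"

lemma plist_perm:
  assumes C: "distinct C" and D: "distinct D" and s: "set D = set C"
  shows "plist C D permutes set C"
proof -
  have len: "length D = length C" using C D s by (metis distinct_card)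
  have "bij_betw (plist C D) (set C) (set C)"
  proof (rule bij_betw_imageI)
    show "inj_on (plist C D) (set C)"
    proof (rule inj_onI)
      fix x y assume xy: "x \<in> set C" "y \<in> set C" "plist C D x = plist C D y"
      then have "D ! rk C x = D ! rk C y" by (simp add: plist_def)
      moreover have "rk C x < length D" "rk C y < length D" using xy len rk_less by metis+
      ultimately have "rk C x = rk C y" using D nth_eq_iff_index_eq by blast
      then show "x = y" using xy rk_inj by metis
    qed
    show "plist C D ` set C = set C"
    proof
      show "plist C D ` set C \<subseteq> set C"
        using len s rk_less[of _ C] nth_mem[of _ D] by (auto simp: plist_def)
      show "set C \<subseteq> plist C D ` set C"
      proof
        fix d assume "d \<in> set C"
        then obtain j where j: "j < length D" "D ! j = d" using s by (metis in_set_conv_nth)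
        then have "C ! j \<in> set C" "rk C (C ! j) = j" using len C rk_nth by auto
        then show "d \<in> plist C D ` set C" using j by (auto simp: plist_def intro!: image_eqI[of _ _ "C ! j"])
      qed
    qed
  qed
  moreover have "\<forall>x. x \<notin> set C \<longrightarrow> plist C D x = x" by (simp add: plist_def)
  ultimately show ?thesis by (simp add: bij_imp_permutes)
qed

lemma kap_plist:
  assumes C: "distinct C" and D: "distinct D" and s: "set D = set C" and c: "c \<in> set C"
  shows "rk C (inv (plist C D) c) = rk D c"
proof -
  have len: "length D = length C" using C D s by (metis distinct_card)
  let ?j = "rk D c"
  have j: "?j < length C" "D ! ?j = c" using c s len rk_less nth_rk by metis+
  have "plist C D (C ! ?j) = c" using j C by (simp add: plist_def rk_nth)
  then have "inv (plist C D) c = C ! ?j"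
    using plist_perm[OF C D s] by (simp add: permutes_inv_eq)
  then show ?thesis using j C by (simp add: rk_nth)
qed

lemma CondD_cong: "(\<And>c. c \<in> set v \<Longrightarrow> \<kappa> c = \<kappa>' c) \<Longrightarrow> CondD r \<kappa> v = CondD r \<kappa>' v"
proof -
  assume h: "\<And>c. c \<in> set v \<Longrightarrow> \<kappa> c = \<kappa>' c"
  have "last x \<in> set v" if "isrot v x" for x
    using that isrot_set isrot_ne last_in_set by metis
  then show ?thesis unfolding CondD_def using h by metis
qed

lemma cl_intro:
  assumes C: "distinct C" and D: "distinct D" and s: "set D = set C" and v: "set v \<subseteq> set C"
    and cd: "CondD (rk C) (rk D) v"
  shows "\<exists>\<tau>. clustering C \<tau> v"
proof -
  have "CondD (rk C) (\<lambda>c. rk C (inv (plist C D) c)) v"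
    using cd CondD_cong[of v "\<lambda>c. rk C (inv (plist C D) c)" "rk D"] kap_plist[OF C D s] v by auto
  then have "clustering C (plist C D) v"
    using clust_iff[OF C] plist_perm[OF C D s] v by auto
  then show ?thesis by blast
qed

lemma cl_elim:
  assumes A: "distinct A" and cl: "clustering A \<pi> w"
  shows "set w \<subseteq> set A" "\<pi> permutes set A" "CondD (rk A) (rk (map \<pi> A)) w"
    "distinct (map \<pi> A)" "set (map \<pi> A) = set A"
proof -
  show w: "set w \<subseteq> set A" and p: "\<pi> permutes set A" using cl by (auto simp: clustering_def)
  show "distinct (map \<pi> A)" using A p by (simp add: distinct_map permutes_inj_on)
  show "set (map \<pi> A) = set A" using p by (simp add: permutes_image)
  have k: "rk A (inv \<pi> c) = rk (map \<pi> A) c" if c: "c \<in> set A" for c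
  proof -
    let ?j = "rk A (inv \<pi> c)"
    have ic: "inv \<pi> c \<in> set A" using p c by (simp add: permutes_inv permutes_in_image)
    then have j: "?j < length A" "A ! ?j = inv \<pi> c" using rk_less nth_rk by metis+
    then have "map \<pi> A ! ?j = c" using p by (simp add: permutes_inverses(1))
    moreover have "distinct (map \<pi> A)" using A p by (simp add: distinct_map permutes_inj_on)
    ultimately show ?thesis using j rk_nth by (metis length_map)
  qed
  have "CondD (rk A) (\<lambda>c. rk A (inv \<pi> c)) w" using cl clust_iff[OF A] by auto
  then show "CondD (rk A) (rk (map \<pi> A)) w"
    using CondD_cong[of w "\<lambda>c. rk A (inv \<pi> c)" "rk (map \<pi> A)"] k w by auto
qed

definition dlt :: "('a \<Rightarrow> nat) \<Rightarrow> 'a list \<Rightarrow> 'a list \<Rightarrow> bool" where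
  "dlt r x y \<longleftrightarrow> (\<exists>c d e u v. x = c @ d # u \<and> y = c @ e # v \<and> r d < r e)"

lemma dlt_lt: "dlt r x y \<Longrightarrow> lt r x y"
  unfolding dlt_def lt_def list_less_def lexord_def
  by (force simp: map_append)

lemma lt_dlt: assumes "lt r x y" "length x = length y" and inj: "inj_on r (set x \<union> set y)" shows "dlt r x y"
proof -
  from assms(1) have "(map r x, map r y) \<in> lexord {(u, v). u < v}"
    by (simp add: lt_def list_less_def)
  then obtain c d e u v where cde: "map r x = c @ d # u" "map r y = c @ e # v" "d < e"
    using assms(2) unfolding lexord_def by (auto dest: arg_cong[of _ _ length])
  from cde(1) obtain c1 x1 where x1: "x = c1 @ x1" "map r c1 = c" "map r x1 = d # u"
    by (auto simp: map_eq_append_conv)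
  from cde(2) obtain c2 y1 where y1: "y = c2 @ y1" "map r c2 = c" "map r y1 = e # v"
    by (auto simp: map_eq_append_conv)
  obtain d' u' where "x1 = d' # u'" "r d' = d" using x1 by (auto simp: map_eq_Cons_conv)
  moreover obtain e' v' where "y1 = e' # v'" "r e' = e" using y1 by (auto simp: map_eq_Cons_conv)
  moreover have "c1 = c2"
  proof -
    have "inj_on r (set c1 \<union> set c2)" using inj x1 y1 by (auto intro: inj_on_subset)
    then show ?thesis using map_inj_on x1 y1 by metis
  qed
  ultimately show ?thesis unfolding dlt_def using x1 y1 cde(3) by blast
qed

lemma dlt_app: "dlt r x y \<Longrightarrow> dlt r (x @ z) (y @ z')"
  unfolding dlt_def by force

lemma dlt_Cons: "dlt r x y \<Longrightarrow> dlt r (f # x) (f # y)"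
  unfolding dlt_def by (metis append_Cons)

lemma lt_Cons: "lt r (c # x) (d # y) \<longleftrightarrow> r c < r d \<or> r c = r d \<and> lt r x y"
  by (simp add: lt_def)

lemma lt_asym: "lt r x y \<Longrightarrow> \<not> lt r y x"
  by (simp add: lt_def)

lemma lt_irrefl: "\<not> lt r x x"
  by (simp add: lt_def)

lemma lt_total: "map r x \<noteq> map r y \<Longrightarrow> lt r x y \<or> lt r y x"
  by (auto simp: lt_def neq_iff)

lemma rot_order:
  assumes cd: "CondD r \<kappa> w" and x: "isrot w x" and y: "isrot w y"
    and inj: "inj_on r (set w)" and k: "\<kappa> (last x) < \<kappa> (last y)"
  shows "lt r x y"
proof -
  have "\<not> lt r y x" using cd x y k unfolding CondD_def by force
  moreover have "map r x \<noteq> map r y"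
  proof
    assume "map r x = map r y"
    then have "x = y" using map_inj_on inj isrot_set x y by (metis Un_absorb)
    then show False using k by simp
  qed
  ultimately show ?thesis using lt_total by blast
qed

lemma rot_lt_dlt:
  assumes x: "isrot w x" and y: "isrot w y" and inj: "inj_on r (set w)" and l: "lt r x y"
  shows "dlt r x y"
  using lt_dlt[OF l] isrot_length[OF x] isrot_length[OF y] isrot_set[OF x] isrot_set[OF y] inj
  by simp

lemma concat_split:
  "concat (map f w) = P @ S \<Longrightarrow>
    (\<exists>p s. w = p @ s \<and> P = concat (map f p) \<and> S = concat (map f s)) \<or>
    (\<exists>p c s q1 q2. w = p @ c # s \<and> f c = q1 @ q2 \<and> q1 \<noteq> [] \<and> q2 \<noteq> [] \<and>
        P = concat (map f p) @ q1 \<and> S = q2 @ concat (map f s))"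
proof (induction w arbitrary: P)
  case Nil then show ?case by simp
next
  case (Cons c w)
  from Cons.prems have "f c @ concat (map f w) = P @ S" by simp
  then obtain us where us: "(f c = P @ us \<and> us @ concat (map f w) = S) \<or> (f c @ us = P \<and> concat (map f w) = us @ S)"
    by (auto simp: append_eq_append_conv2)
  then show ?case
  proof
    assume h: "f c = P @ us \<and> us @ concat (map f w) = S"
    show ?thesis
    proof (cases "P = []")
      case True then show ?thesis using h by (intro disjI1 exI[of _ "[]"] exI[of _ "c # w"]) auto
    next
      case False
      show ?thesis
      proof (cases "us = []")
        case True then show ?thesis using h by (intro disjI1 exI[of _ "[c]"] exI[of _ "w"]) auto
      next
        case F2: False
        then show ?thesis using h False
          by (intro disjI2 exI[of _ "[]"] exI[of _ c] exI[of _ w] exI[of _ P] exI[of _ us]) auto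
      qed
    qed
  next
    assume h: "f c @ us = P \<and> concat (map f w) = us @ S"
    then have "(\<exists>p s. w = p @ s \<and> us = concat (map f p) \<and> S = concat (map f s)) \<or>
    (\<exists>p c s q1 q2. w = p @ c # s \<and> f c = q1 @ q2 \<and> q1 \<noteq> [] \<and> q2 \<noteq> [] \<and>
        us = concat (map f p) @ q1 \<and> S = q2 @ concat (map f s))" using Cons.IH by blast
    then show ?thesis
    proof
      assume "\<exists>p s. w = p @ s \<and> us = concat (map f p) \<and> S = concat (map f s)"
      then obtain p s where "w = p @ s \<and> us = concat (map f p) \<and> S = concat (map f s)" by blast
      then show ?thesis using h by (intro disjI1 exI[of _ "c # p"] exI[of _ s]) auto
    next
      assume "\<exists>p c s q1 q2. w = p @ c # s \<and> f c = q1 @ q2 \<and> q1 \<noteq> [] \<and> q2 \<noteq> [] \<and>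
        us = concat (map f p) @ q1 \<and> S = q2 @ concat (map f s)"
      then obtain p c' s q1 q2 where "w = p @ c' # s \<and> f c' = q1 @ q2 \<and> q1 \<noteq> [] \<and> q2 \<noteq> [] \<and>
        us = concat (map f p) @ q1 \<and> S = q2 @ concat (map f s)" by blast
      then show ?thesis using h by (intro disjI2 exI[of _ "c # p"] exI[of _ c'] exI[of _ s] exI[of _ q1] exI[of _ q2]) auto
    qed
  qed
qed

lemma alpha_simps[simp]: "alpha a b [] = []" "alpha a b (x @ y) = alpha a b x @ alpha a b y"
  "alpha a b (c # y) = (if c = a then a # b # alpha a b y else c # alpha a b y)"
  by (auto simp: alpha_def)

lemma alpha_tilde_simps[simp]: "alpha_tilde a b [] = []" "alpha_tilde a b (x @ y) = alpha_tilde a b x @ alpha_tilde a b y"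
  "alpha_tilde a b (c # y) = (if c = a then b # a # alpha_tilde a b y else c # alpha_tilde a b y)"
  by (auto simp: alpha_tilde_def)

lemma rot_in: "w = p @ c # s \<Longrightarrow> isrot w (s @ p @ [c])"
  unfolding isrot_def
  by (cases "s = []") (auto intro: exI[of _ "[]"] exI[of _ "p @ [c]"])

lemma rot_alpha:
  assumes "isrot (alpha a b w) R"
  shows "(\<exists>y. isrot w y \<and> R = alpha a b y) \<or> (\<exists>x. isrot w (x @ [a]) \<and> R = b # alpha a b x @ [a])"
proof -
  obtain P S where PS: "alpha a b w = P @ S" "S \<noteq> []" "R = S @ P" using assms by (auto simp: isrot_def)
  let ?f = "\<lambda>c. if c = a then [a, b] else [c]"
  have "concat (map ?f w) = P @ S" using PS by (simp add: alpha_def)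
  from concat_split[OF this] show ?thesis
  proof
    assume "\<exists>p s. w = p @ s \<and> P = concat (map ?f p) \<and> S = concat (map ?f s)"
    then obtain p s where ps: "w = p @ s" "P = alpha a b p" "S = alpha a b s" by (auto simp: alpha_def)
    then have "s \<noteq> []" using PS by auto
    then show ?thesis using ps PS by (intro disjI1 exI[of _ "s @ p"]) (auto simp: isrot_def)
  next
    assume "\<exists>p c s q1 q2. w = p @ c # s \<and> ?f c = q1 @ q2 \<and> q1 \<noteq> [] \<and> q2 \<noteq> [] \<and>
        P = concat (map ?f p) @ q1 \<and> S = q2 @ concat (map ?f s)"
    then obtain p c s q1 q2 where h: "w = p @ c # s" "?f c = q1 @ q2" "q1 \<noteq> []" "q2 \<noteq> []"
        "P = alpha a b p @ q1" "S = q2 @ alpha a b s" by (auto simp: alpha_def)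
    then have "c = a" "q1 = [a]" "q2 = [b]"
      by (auto split: if_splits simp: Cons_eq_append_conv append_eq_Cons_conv)
    then show ?thesis using h PS rot_in[OF h(1)]
      by (intro disjI2 exI[of _ "s @ p"]) auto
  qed
qed

lemma rot_alpha_tilde:
  assumes "isrot (alpha_tilde a b w) R"
  shows "(\<exists>y. isrot w y \<and> R = alpha_tilde a b y) \<or> (\<exists>x. isrot w (x @ [a]) \<and> R = a # alpha_tilde a b x @ [b])"
proof -
  obtain P S where PS: "alpha_tilde a b w = P @ S" "S \<noteq> []" "R = S @ P" using assms by (auto simp: isrot_def)
  let ?f = "\<lambda>c. if c = a then [b, a] else [c]"
  have "concat (map ?f w) = P @ S" using PS by (simp add: alpha_tilde_def)
  from concat_split[OF this] show ?thesis
  proof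
    assume "\<exists>p s. w = p @ s \<and> P = concat (map ?f p) \<and> S = concat (map ?f s)"
    then obtain p s where ps: "w = p @ s" "P = alpha_tilde a b p" "S = alpha_tilde a b s" by (auto simp: alpha_tilde_def)
    then have "s \<noteq> []" using PS by auto
    then show ?thesis using ps PS by (intro disjI1 exI[of _ "s @ p"]) (auto simp: isrot_def)
  next
    assume "\<exists>p c s q1 q2. w = p @ c # s \<and> ?f c = q1 @ q2 \<and> q1 \<noteq> [] \<and> q2 \<noteq> [] \<and>
        P = concat (map ?f p) @ q1 \<and> S = q2 @ concat (map ?f s)"
    then obtain p c s q1 q2 where h: "w = p @ c # s" "?f c = q1 @ q2" "q1 \<noteq> []" "q2 \<noteq> []"
        "P = alpha_tilde a b p @ q1" "S = q2 @ alpha_tilde a b s" by (auto simp: alpha_tilde_def)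
    then have "c = a" "q1 = [b]" "q2 = [a]"
      by (auto split: if_splits simp: Cons_eq_append_conv append_eq_Cons_conv)
    then show ?thesis using h PS rot_in[OF h(1)]
      by (intro disjI2 exI[of _ "s @ p"]) auto
  qed
qed

lemma dlt_alpha:
  assumes "dlt r x y" "set x \<subseteq> S" "set y \<subseteq> S"
    and mono: "\<And>d e. d \<in> S \<Longrightarrow> e \<in> S \<Longrightarrow> r d < r e \<Longrightarrow> r' d < r' e"
  shows "dlt r' (alpha a b x) (alpha a b y)"
proof -
  obtain c d e u v where h: "x = c @ d # u" "y = c @ e # v" "r d < r e" using assms(1) by (auto simp: dlt_def)
  have "r' d < r' e" using mono h assms(2,3) by auto
  then show ?thesis using h unfolding dlt_def
    by (intro exI[of _ "alpha a b c"] exI[of _ d] exI[of _ e]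
        exI[of _ "(if d = a then b # alpha a b u else alpha a b u)"]
        exI[of _ "(if e = a then b # alpha a b v else alpha a b v)"]) simp
qed

lemma last_alpha: "y \<noteq> [] \<Longrightarrow> last (alpha a b y) = (if last y = a then b else last y)"
  by (induction y rule: rev_induct) auto

lemma last_alpha_tilde: "y \<noteq> [] \<Longrightarrow> last (alpha_tilde a b y) = last y"
  by (induction y rule: rev_induct) auto

lemma reflect_gen:
  assumes x: "isrot w x" and y: "isrot w y" and inj: "inj_on r (set w)"
    and m: "\<And>x y. isrot w x \<Longrightarrow> isrot w y \<Longrightarrow> lt r x y \<Longrightarrow> lt r' (g x) (g y)"
    and l: "lt r' (g x) (g y)"
  shows "lt r x y"
proof -
  have "x \<noteq> y" using l lt_irrefl by metis
  then have "map r x \<noteq> map r y" using map_inj_on inj isrot_set x y by (metis Un_absorb)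
  moreover have "\<not> lt r y x" using m[OF y x] l lt_asym by blast
  ultimately show ?thesis using lt_total by blast
qed

lemma alpha_general:
  assumes cd: "CondD r \<kappa> w" and wS: "set w \<subseteq> S" and injr: "inj_on r S"
    and mono: "\<And>d e. d \<in> S \<Longrightarrow> e \<in> S \<Longrightarrow> r d < r e \<Longrightarrow> r' d < r' e"
    and kmono: "\<And>c d. c \<in> S \<Longrightarrow> d \<in> S \<Longrightarrow> \<kappa> c \<le> \<kappa> d \<Longrightarrow>
        \<kappa>' (if c = a then b else c) \<le> \<kappa>' (if d = a then b else d)"
    and HI: "\<And>y x. isrot w y \<Longrightarrow> isrot w (x @ [a]) \<Longrightarrow> lt r' (alpha a b y) (b # alpha a b x @ [a])
        \<Longrightarrow> \<kappa>' (if last y = a then b else last y) \<le> \<kappa>' a"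
    and HII: "\<And>y x. isrot w y \<Longrightarrow> isrot w (x @ [a]) \<Longrightarrow> lt r' (b # alpha a b x @ [a]) (alpha a b y)
        \<Longrightarrow> \<kappa>' a \<le> \<kappa>' (if last y = a then b else last y)"
  shows "CondD r' \<kappa>' (alpha a b w)"
  unfolding CondD_def
proof (intro allI impI)
  fix R1 R2 assume R: "isrot (alpha a b w) R1" "isrot (alpha a b w) R2" "lt r' R1 R2"
  have inj: "inj_on r (set w)" using injr wS inj_on_subset by blast
  have m: "lt r' (alpha a b x) (alpha a b y)" if "isrot w x" "isrot w y" "lt r x y" for x y
  proof -
    have "dlt r x y" using rot_lt_dlt[OF that(1,2) inj that(3)] .
    moreover have "set x \<subseteq> S" "set y \<subseteq> S" using isrot_set that(1,2) wS by auto
    ultimately have "dlt r' (alpha a b x) (alpha a b y)" using dlt_alpha[of r x y S r'] mono by blast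
    then show ?thesis by (rule dlt_lt)
  qed
  from rot_alpha[OF R(1)] show "\<kappa>' (last R1) \<le> \<kappa>' (last R2)"
  proof
    assume "\<exists>y. isrot w y \<and> R1 = alpha a b y"
    then obtain y1 where y1: "isrot w y1" "R1 = alpha a b y1" by blast
    from rot_alpha[OF R(2)] show ?thesis
    proof
      assume "\<exists>y. isrot w y \<and> R2 = alpha a b y"
      then obtain y2 where y2: "isrot w y2" "R2 = alpha a b y2" by blast
      have "lt r y1 y2" using reflect_gen[OF y1(1) y2(1) inj, of r' "alpha a b"] m R(3) y1 y2 by blast
      then have "\<kappa> (last y1) \<le> \<kappa> (last y2)" using cd y1 y2 by (auto simp: CondD_def)
      moreover have "last y1 \<in> S" using isrot_set[OF y1(1)] isrot_ne[OF y1(1)] last_in_set wS by blast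
      moreover have "last y2 \<in> S" using isrot_set[OF y2(1)] isrot_ne[OF y2(1)] last_in_set wS by blast
      moreover have "last R1 = (if last y1 = a then b else last y1)" using y1 isrot_ne last_alpha by metis
      moreover have "last R2 = (if last y2 = a then b else last y2)" using y2 isrot_ne last_alpha by metis
      ultimately show ?thesis using kmono by simp
    next
      assume "\<exists>x. isrot w (x @ [a]) \<and> R2 = b # alpha a b x @ [a]"
      then obtain x2 where x2: "isrot w (x2 @ [a])" "R2 = b # alpha a b x2 @ [a]" by blast
      have "last R1 = (if last y1 = a then b else last y1)" using y1 isrot_ne last_alpha by metis
      moreover have "last R2 = a" using x2 by simp
      ultimately show ?thesis using HI[OF y1(1) x2(1)] R(3) y1(2) x2(2) by simp
    qed
  next
    assume "\<exists>x. isrot w (x @ [a]) \<and> R1 = b # alpha a b x @ [a]"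
    then obtain x1 where x1: "isrot w (x1 @ [a])" "R1 = b # alpha a b x1 @ [a]" by blast
    from rot_alpha[OF R(2)] show ?thesis
    proof
      assume "\<exists>y. isrot w y \<and> R2 = alpha a b y"
      then obtain y2 where y2: "isrot w y2" "R2 = alpha a b y2" by blast
      have "last R2 = (if last y2 = a then b else last y2)" using y2 isrot_ne last_alpha by metis
      moreover have "last R1 = a" using x1 by simp
      ultimately show ?thesis using HII[OF y2(1) x1(1)] R(3) y2(2) x1(2) by simp
    next
      assume "\<exists>x. isrot w (x @ [a]) \<and> R2 = b # alpha a b x @ [a]"
      then obtain x2 where x2: "isrot w (x2 @ [a])" "R2 = b # alpha a b x2 @ [a]" by blast
      show ?thesis using x1 x2 by simp
    qed
  qed
qed

lemma at_general:
  assumes cd: "CondD r \<kappa> w" and wS: "set w \<subseteq> S" and injr: "inj_on r S"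
    and m: "\<And>x y. isrot w x \<Longrightarrow> isrot w y \<Longrightarrow> lt r x y \<Longrightarrow> lt r' (alpha_tilde a b x) (alpha_tilde a b y)"
    and kmono: "\<And>c d. c \<in> S \<Longrightarrow> d \<in> S \<Longrightarrow> \<kappa> c \<le> \<kappa> d \<Longrightarrow> \<kappa>' c \<le> \<kappa>' d"
    and HI: "\<And>y x. isrot w y \<Longrightarrow> isrot w (x @ [a]) \<Longrightarrow> lt r' (alpha_tilde a b y) (a # alpha_tilde a b x @ [b])
        \<Longrightarrow> \<kappa>' (last y) \<le> \<kappa>' b"
    and HII: "\<And>y x. isrot w y \<Longrightarrow> isrot w (x @ [a]) \<Longrightarrow> lt r' (a # alpha_tilde a b x @ [b]) (alpha_tilde a b y)
        \<Longrightarrow> \<kappa>' b \<le> \<kappa>' (last y)"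
  shows "CondD r' \<kappa>' (alpha_tilde a b w)"
  unfolding CondD_def
proof (intro allI impI)
  fix R1 R2 assume R: "isrot (alpha_tilde a b w) R1" "isrot (alpha_tilde a b w) R2" "lt r' R1 R2"
  have inj: "inj_on r (set w)" using injr wS inj_on_subset by blast
  from rot_alpha_tilde[OF R(1)] show "\<kappa>' (last R1) \<le> \<kappa>' (last R2)"
  proof
    assume "\<exists>y. isrot w y \<and> R1 = alpha_tilde a b y"
    then obtain y1 where y1: "isrot w y1" "R1 = alpha_tilde a b y1" by blast
    from rot_alpha_tilde[OF R(2)] show ?thesis
    proof
      assume "\<exists>y. isrot w y \<and> R2 = alpha_tilde a b y"
      then obtain y2 where y2: "isrot w y2" "R2 = alpha_tilde a b y2" by blast
      have "lt r y1 y2" using reflect_gen[OF y1(1) y2(1) inj, of r' "alpha_tilde a b"] m R(3) y1 y2 by blast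
      then have "\<kappa> (last y1) \<le> \<kappa> (last y2)" using cd y1 y2 by (auto simp: CondD_def)
      moreover have "last y1 \<in> S" using isrot_set[OF y1(1)] isrot_ne[OF y1(1)] last_in_set wS by blast
      moreover have "last y2 \<in> S" using isrot_set[OF y2(1)] isrot_ne[OF y2(1)] last_in_set wS by blast
      moreover have "last R1 = last y1" using y1 isrot_ne last_alpha_tilde by metis
      moreover have "last R2 = last y2" using y2 isrot_ne last_alpha_tilde by metis
      ultimately show ?thesis using kmono by simp
    next
      assume "\<exists>x. isrot w (x @ [a]) \<and> R2 = a # alpha_tilde a b x @ [b]"
      then obtain x2 where x2: "isrot w (x2 @ [a])" "R2 = a # alpha_tilde a b x2 @ [b]" by blast
      have "last R1 = last y1" using y1 isrot_ne last_alpha_tilde by metis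
      moreover have "last R2 = b" using x2 by simp
      ultimately show ?thesis using HI[OF y1(1) x2(1)] R(3) y1(2) x2(2) by simp
    qed
  next
    assume "\<exists>x. isrot w (x @ [a]) \<and> R1 = a # alpha_tilde a b x @ [b]"
    then obtain x1 where x1: "isrot w (x1 @ [a])" "R1 = a # alpha_tilde a b x1 @ [b]" by blast
    from rot_alpha_tilde[OF R(2)] show ?thesis
    proof
      assume "\<exists>y. isrot w y \<and> R2 = alpha_tilde a b y"
      then obtain y2 where y2: "isrot w y2" "R2 = alpha_tilde a b y2" by blast
      have "last R2 = last y2" using y2 isrot_ne last_alpha_tilde by metis
      moreover have "last R1 = b" using x1 by simp
      ultimately show ?thesis using HII[OF y2(1) x1(1)] R(3) y2(2) x1(2) by simp
    next
      assume "\<exists>x. isrot w (x @ [a]) \<and> R2 = a # alpha_tilde a b x @ [b]"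
      then obtain x2 where x2: "isrot w (x2 @ [a])" "R2 = a # alpha_tilde a b x2 @ [b]" by blast
      show ?thesis using x1 x2 by simp
    qed
  qed
qed

lemma lt_app_left: "lt r X Y \<Longrightarrow> lt r (c @ X) (c @ Y)"
  by (induction c) (auto simp: lt_Cons)

lemma alpha_hd: "\<exists>t. alpha a b (f # y) = f # t"
  by simp

lemma at_hd: "\<exists>g t. alpha_tilde a b (f # y) = g # t \<and> (g = f \<or> g = b) \<and> (a \<noteq> b \<longrightarrow> g \<noteq> a)"
  by (cases "f = a") auto

lemma split_last_diff:
  assumes "x @ [a] = c @ d # u" "u \<noteq> []"
  shows "x = c @ d # butlast u"
proof -
  have "butlast (x @ [a]) = butlast (c @ d # u)" using assms(1) by simp
  then show ?thesis using assms(2) by (simp add: butlast_append)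
qed

lemma alpha_min_lt:
  assumes cd: "CondD r \<kappa> w" and wS: "set w \<subseteq> S" and injr: "inj_on r S"
    and bmin: "\<And>c. c \<in> S \<Longrightarrow> c \<noteq> b \<Longrightarrow> r b < r c" and aS: "a \<in> S"
    and kab: "\<kappa> a < \<kappa> b" and ab: "a \<noteq> b"
    and y: "isrot w y" and x: "isrot w (x @ [a])"
  shows "lt r (b # alpha a b x @ [a]) (alpha a b y)"
proof -
  have inj: "inj_on r (set w)" using injr wS inj_on_subset by blast
  obtain f y' where fy: "y = f # y'" using isrot_ne[OF y] by (cases y) auto
  have fS: "f \<in> S" using isrot_set[OF y] fy wS by auto
  show ?thesis
  proof (cases "f = b")
    case False
    obtain t where "alpha a b y = f # t" using alpha_hd[of a b f y'] fy by auto
    then show ?thesis using bmin[OF fS False] by (simp add: lt_Cons)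
  next
    case True
    have ay: "alpha a b y = b # alpha a b y'" using fy True ab by simp
    have y2: "isrot w (y' @ [b])" using isrot_shift[of w b y'] y fy True by simp
    have "lt r (x @ [a]) (y' @ [b])" using rot_order[OF cd x y2 inj] kab by simp
    then have "dlt r (x @ [a]) (y' @ [b])" using rot_lt_dlt x y2 inj by blast
    then obtain c d e u v where h: "x @ [a] = c @ d # u" "y' @ [b] = c @ e # v" "r d < r e"
      by (auto simp: dlt_def)
    have "length (x @ [a]) = length (y' @ [b])" using isrot_length[OF x] isrot_length[OF y2] by simp
    then have len: "length u = length v" using h by simp
    have "u \<noteq> []"
    proof
      assume "u = []"
      then have "v = []" using len by simp
      have "d = a" using h(1) \<open>u = []\<close> by simp
      moreover have "e = b" using h(2) \<open>v = []\<close> by simp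
      ultimately
      show False using h(3) bmin[OF aS ab] by simp
    qed
    then have "v \<noteq> []" using len by (cases v) auto
    have "x = c @ d # butlast u" by (rule split_last_diff[OF h(1) \<open>u \<noteq> []\<close>])
    moreover have "y' = c @ e # butlast v" by (rule split_last_diff[OF h(2) \<open>v \<noteq> []\<close>])
    ultimately have "dlt r x y'" using h(3) by (auto simp: dlt_def)
    moreover have "set x \<subseteq> S" "set y' \<subseteq> S" using isrot_set[OF x] isrot_set[OF y2] wS by auto
    ultimately have "dlt r (alpha a b x) (alpha a b y')" using dlt_alpha[of r x y' S r] by blast
    then have "dlt r (alpha a b x @ [a]) (alpha a b y' @ [])" by (rule dlt_app)
    then have "lt r (alpha a b x @ [a]) (alpha a b y')" using dlt_lt by simp
    then show ?thesis using ay by (simp add: lt_Cons)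
  qed
qed

lemma alpha_max_lt:
  assumes cd: "CondD r \<kappa> w" and wS: "set w \<subseteq> S" and injr: "inj_on r S"
    and bmax: "\<And>c. c \<in> S \<Longrightarrow> c \<noteq> b \<Longrightarrow> r c < r b" and aS: "a \<in> S"
    and kab: "\<kappa> b < \<kappa> a" and ab: "a \<noteq> b"
    and y: "isrot w y" and x: "isrot w (x @ [a])"
  shows "lt r (alpha a b y) (b # alpha a b x @ [a])"
proof -
  have inj: "inj_on r (set w)" using injr wS inj_on_subset by blast
  obtain f y' where fy: "y = f # y'" using isrot_ne[OF y] by (cases y) auto
  have fS: "f \<in> S" using isrot_set[OF y] fy wS by auto
  show ?thesis
  proof (cases "f = b")
    case False
    obtain t where "alpha a b y = f # t" using alpha_hd[of a b f y'] fy by auto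
    then show ?thesis using bmax[OF fS False] by (simp add: lt_Cons)
  next
    case True
    have ay: "alpha a b y = b # alpha a b y'" using fy True ab by simp
    have y2: "isrot w (y' @ [b])" using isrot_shift[of w b y'] y fy True by simp
    have "lt r (y' @ [b]) (x @ [a])" using rot_order[OF cd y2 x inj] kab by simp
    then have "dlt r (y' @ [b]) (x @ [a])" using rot_lt_dlt x y2 inj by blast
    then obtain c d e u v where h: "y' @ [b] = c @ d # u" "x @ [a] = c @ e # v" "r d < r e"
      by (auto simp: dlt_def)
    have "length (x @ [a]) = length (y' @ [b])" using isrot_length[OF x] isrot_length[OF y2] by simp
    then have len: "length u = length v" using h by simp
    have "u \<noteq> []"
    proof
      assume "u = []"
      then have "v = []" using len by simp
      have "y' = c" using h(1) \<open>u = []\<close> by simp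
      moreover have "x = c" using h(2) \<open>v = []\<close> by simp
      ultimately have "y' = x" by simp
      moreover have "mset (y' @ [b]) = mset (x @ [a])" using isrot_mset[OF y2] isrot_mset[OF x] by simp
      ultimately show False using ab by simp
    qed
    then have "v \<noteq> []" using len by (cases v) auto
    have "y' = c @ d # butlast u" by (rule split_last_diff[OF h(1) \<open>u \<noteq> []\<close>])
    moreover have "x = c @ e # butlast v" by (rule split_last_diff[OF h(2) \<open>v \<noteq> []\<close>])
    ultimately have "dlt r y' x" using h(3) by (auto simp: dlt_def)
    moreover have "set x \<subseteq> S" "set y' \<subseteq> S" using isrot_set[OF x] isrot_set[OF y2] wS by auto
    ultimately have "dlt r (alpha a b y') (alpha a b x)" using dlt_alpha[of r y' x S r] by blast
    then have "dlt r (alpha a b y' @ []) (alpha a b x @ [a])" by (rule dlt_app)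
    then have "lt r (alpha a b y') (alpha a b x @ [a])" using dlt_lt by simp
    then show ?thesis using ay by (simp add: lt_Cons)
  qed
qed

lemma length_at: "length (alpha_tilde a b x) = length x + count_list x a"
  by (induction x) auto

lemma at_mono:
  assumes wS: "set w \<subseteq> S" and injr: "inj_on r S" and aS: "a \<in> S" and bS: "b \<in> S" and ab: "a \<noteq> b"
    and H1: "\<And>d e. d \<in> S \<Longrightarrow> e \<in> S \<Longrightarrow> d \<noteq> a \<Longrightarrow> e \<noteq> a \<Longrightarrow> r d < r e \<Longrightarrow> r' d < r' e"
    and H2: "\<And>e. e \<in> S \<Longrightarrow> e \<noteq> a \<Longrightarrow> e \<noteq> b \<Longrightarrow> r a < r e \<Longrightarrow> r' b < r' e"
    and H3: "\<And>d. d \<in> S \<Longrightarrow> d \<noteq> a \<Longrightarrow> d \<noteq> b \<Longrightarrow> r d < r a \<Longrightarrow> r' d < r' b"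
    and H45: "(r a < r b \<and> (\<forall>g\<in>S. g \<noteq> a \<longrightarrow> r' a < r' g)) \<or> (r b < r a \<and> (\<forall>g\<in>S. g \<noteq> a \<longrightarrow> r' g < r' a))"
    and x: "isrot w x" and y: "isrot w y" and l: "lt r x y"
  shows "lt r' (alpha_tilde a b x) (alpha_tilde a b y)"
proof -
  have inj: "inj_on r (set w)" using injr wS inj_on_subset by blast
  obtain c d e u v where h: "x = c @ d # u" "y = c @ e # v" "r d < r e"
    using rot_lt_dlt[OF x y inj l] by (auto simp: dlt_def)
  have "set x \<subseteq> S" "set y \<subseteq> S" using isrot_set[OF x] isrot_set[OF y] wS by auto
  then have dS: "d \<in> S" "e \<in> S" "set u \<subseteq> S" "set v \<subseteq> S" using h by auto
  have "mset x = mset y" using isrot_mset[OF x] isrot_mset[OF y] by simp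
  then have "count_list x a = count_list y a" by (metis count_mset)
  moreover have "length x = length y" using isrot_length[OF x] isrot_length[OF y] by simp
  ultimately have "length (alpha_tilde a b x) = length (alpha_tilde a b y)"
    by (simp add: length_at)
  then have lenE: "length (alpha_tilde a b (d # u)) = length (alpha_tilde a b (e # v))"
    using h by simp
  have "lt r' (alpha_tilde a b (d # u)) (alpha_tilde a b (e # v))"
  proof (cases "d = a")
    case da: True
    then have ea: "e \<noteq> a" using h(3) by auto
    show ?thesis
    proof (cases "e = b")
      case eb: True
      then have rab: "r a < r b" using h(3) da by simp
      then have amin: "\<forall>g\<in>S. g \<noteq> a \<longrightarrow> r' a < r' g" using H45 by auto
      have "v \<noteq> []"
      proof
        assume "v = []" then show False using lenE da eb ab by simp
      qed
      then obtain g0 v' where "v = g0 # v'" by (cases v) auto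
      then obtain g t where gt: "alpha_tilde a b v = g # t" "g = g0 \<or> g = b" "g \<noteq> a"
        using at_hd[of a b g0 v'] ab by blast
      have "g \<in> S" using gt dS \<open>v = g0 # v'\<close> bS by auto
      then have "r' a < r' g" using amin gt by auto
      then show ?thesis using da eb ab gt by (simp add: lt_Cons)
    next
      case eb: False
      then show ?thesis using da ea H2[OF dS(2) ea eb] h(3) ab by (simp add: lt_Cons)
    qed
  next
    case da: False
    show ?thesis
    proof (cases "e = a")
      case ea: True
      show ?thesis
      proof (cases "d = b")
        case db: True
        then have rab: "r b < r a" using h(3) ea by simp
        then have amax: "\<forall>g\<in>S. g \<noteq> a \<longrightarrow> r' g < r' a" using H45 by auto
        have "u \<noteq> []"
        proof
          assume "u = []" then show False using lenE ea db ab by simp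
        qed
        then obtain g0 u' where "u = g0 # u'" by (cases u) auto
        then obtain g t where gt: "alpha_tilde a b u = g # t" "g = g0 \<or> g = b" "g \<noteq> a"
          using at_hd[of a b g0 u'] ab by blast
        have "g \<in> S" using gt dS \<open>u = g0 # u'\<close> bS by auto
        then have "r' g < r' a" using amax gt by auto
        then show ?thesis using ea db ab gt by (simp add: lt_Cons)
      next
        case db: False
        then show ?thesis using da ea H3[OF dS(1) da db] h(3) by (simp add: lt_Cons)
      qed
    next
      case ea: False
      then show ?thesis using da H1[OF dS(1,2) da ea h(3)] by (simp add: lt_Cons)
    qed
  qed
  then show ?thesis using h lt_app_left[of r' _ _ "alpha_tilde a b c"] by simp
qed

lemma move_front:
  assumes "i < length L"
  shows "mset (L ! i # take i L @ drop (Suc i) L) = mset L"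
proof -
  have "L = take i L @ L ! i # drop (Suc i) L" using assms by (rule id_take_nth_drop)
  then have "mset L = mset (take i L) + add_mset (L ! i) (mset (drop (Suc i) L))"
    by (metis mset.simps(2) mset_append)
  then show ?thesis by simp
qed

lemma move_back:
  assumes "i < length L"
  shows "mset (take i L @ drop (Suc i) L @ [L ! i]) = mset L"
proof -
  have "L = take i L @ L ! i # drop (Suc i) L" using assms by (rule id_take_nth_drop)
  then have "mset L = mset (take i L) + add_mset (L ! i) (mset (drop (Suc i) L))"
    by (metis mset.simps(2) mset_append)
  then show ?thesis by simp
qed

lemma mset_distinct_set:
  assumes "mset L' = mset L" "distinct L"
  shows "distinct L'" "set L' = set L"
  using assms(2) mset_eq_imp_distinct_iff[OF assms(1)] apply simp
  using mset_eq_setD[OF assms(1)] .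

lemma isrot_last: "isrot w x \<Longrightarrow> last x \<in> set w"
proof -
  assume h: "isrot w x"
  have "last x \<in> set x" by (rule last_in_set[OF isrot_ne[OF h]])
  then show ?thesis using isrot_set[OF h] by simp
qed

lemma CondD_transfer:
  assumes "CondD r \<kappa> w"
    and "\<And>x y. isrot w x \<Longrightarrow> isrot w y \<Longrightarrow> lt r' x y \<Longrightarrow> lt r x y"
    and "\<And>c d. c \<in> set w \<Longrightarrow> d \<in> set w \<Longrightarrow> \<kappa> c \<le> \<kappa> d \<Longrightarrow> \<kappa>' c \<le> \<kappa>' d"
  shows "CondD r' \<kappa>' w"
  unfolding CondD_def
proof (intro allI impI)
  fix x y assume h: "isrot w x" "isrot w y" "lt r' x y"
  have l: "lt r x y" by (rule assms(2)[OF h])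
  have "\<kappa> (last x) \<le> \<kappa> (last y)" using assms(1) h(1,2) l by (simp add: CondD_def)
  then show "\<kappa>' (last x) \<le> \<kappa>' (last y)" by (rule assms(3)[OF isrot_last[OF h(1)] isrot_last[OF h(2)]])
qed

lemma lt_cong: "(\<And>c. c \<in> set x \<union> set y \<Longrightarrow> r' c = r c) \<Longrightarrow> lt r' x y = lt r x y"
proof -
  assume h: "\<And>c. c \<in> set x \<union> set y \<Longrightarrow> r' c = r c"
  have "map r' x = map r x" by (rule map_cong) (use h in auto)
  moreover have "map r' y = map r y" by (rule map_cong) (use h in auto)
  ultimately show ?thesis unfolding lt_def by (simp only:)
qed

lemma part7:
  assumes A: "distinct A" and cl: "clustering A \<pi> w" and B: "distinct B" and dj: "set B \<inter> set A = {}"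
  shows "\<exists>\<pi>'. clustering (A @ B) \<pi>' w"
proof -
  note e = cl_elim[OF A cl]
  let ?D = "map \<pi> A"
  show ?thesis
  proof (rule cl_intro[of _ "?D @ B"])
    show "distinct (A @ B)" using A B dj by auto
    show "distinct (?D @ B)" using e(4,5) B dj by auto
    show "set (?D @ B) = set (A @ B)" using e(5) by auto
    show "set w \<subseteq> set (A @ B)" using e(1) by auto
    show "CondD (rk (A @ B)) (rk (?D @ B)) w"
    proof (rule CondD_transfer[OF e(3)])
      fix x y assume xy: "isrot w x" "isrot w y" "lt (rk (A @ B)) x y"
      have "rk (A @ B) c = rk A c" if "c \<in> set x \<union> set y" for c
      proof -
        have "c \<in> set A" using that isrot_set[OF xy(1)] isrot_set[OF xy(2)] e(1) by auto
        then show ?thesis by (rule rk_append)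
      qed
      then have "lt (rk (A @ B)) x y = lt (rk A) x y" by (rule lt_cong)
      then show "lt (rk A) x y" using xy(3) by simp
    next
      fix c d assume "c \<in> set w" "d \<in> set w" "rk ?D c \<le> rk ?D d"
      moreover have "c \<in> set ?D" "d \<in> set ?D" using \<open>c \<in> set w\<close> \<open>d \<in> set w\<close> e(1,5) by auto
      ultimately show "rk (?D @ B) c \<le> rk (?D @ B) d" by (simp add: rk_append)
    qed
  qed
qed

lemma rot_map: "isrot (map \<mu> w) R \<Longrightarrow> \<exists>y. isrot w y \<and> R = map \<mu> y"
proof -
  assume "isrot (map \<mu> w) R"
  then obtain P S where h: "map \<mu> w = P @ S" "S \<noteq> []" "R = S @ P" by (auto simp: isrot_def)
  then obtain p s where "w = p @ s" "P = map \<mu> p" "S = map \<mu> s" by (auto simp: map_eq_append_conv)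
  then show ?thesis using h by (intro exI[of _ "s @ p"]) (auto simp: isrot_def)
qed

lemma rk_map:
  assumes "distinct L" "inj_on \<mu> (set L)" "c \<in> set L"
  shows "rk (map \<mu> L) (\<mu> c) = rk L c"
proof -
  let ?j = "rk L c"
  have j: "?j < length L" "L ! ?j = c" using assms(3) rk_less nth_rk by metis+
  have "distinct (map \<mu> L)" using assms by (simp add: distinct_map)
  moreover have "map \<mu> L ! ?j = \<mu> c" using j by simp
  ultimately show ?thesis using rk_nth j by (metis length_map)
qed

lemma part1:
  assumes A: "distinct A" and cl: "clustering A \<pi> w" and mu: "\<mu> permutes set A"
  shows "\<exists>\<pi>'. clustering (map \<mu> A) \<pi>' (map \<mu> w)"
proof -
  define D where "D = map \<pi> A"
  note e = cl_elim[OF A cl, folded D_def]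
  let ?D = D
  have inj: "inj_on \<mu> (set A)" using mu by (rule permutes_inj_on)
  have injD: "inj_on \<mu> (set ?D)" using inj e(5) by simp
  show ?thesis
  proof (rule cl_intro[of _ "map \<mu> ?D"])
    show "distinct (map \<mu> A)" using A inj by (simp add: distinct_map)
    show "distinct (map \<mu> ?D)" using e(4) injD by (simp add: distinct_map)
    show "set (map \<mu> ?D) = set (map \<mu> A)" using e(5) by (simp only: set_map)
    show "set (map \<mu> w) \<subseteq> set (map \<mu> A)" using e(1) by auto
    show "CondD (rk (map \<mu> A)) (rk (map \<mu> ?D)) (map \<mu> w)"
      unfolding CondD_def
    proof (intro allI impI)
      fix R1 R2 assume R: "isrot (map \<mu> w) R1" "isrot (map \<mu> w) R2" "lt (rk (map \<mu> A)) R1 R2"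
      obtain y1 where y1: "isrot w y1" "R1 = map \<mu> y1" using rot_map[OF R(1)] by blast
      obtain y2 where y2: "isrot w y2" "R2 = map \<mu> y2" using rot_map[OF R(2)] by blast
      have s1: "set y1 \<subseteq> set A" "set y2 \<subseteq> set A" using isrot_set[OF y1(1)] isrot_set[OF y2(1)] e(1) by auto
      have q1: "map (rk (map \<mu> A)) (map \<mu> y1) = map (rk A) y1"
        using s1 rk_map[OF A inj] by auto
      have q2: "map (rk (map \<mu> A)) (map \<mu> y2) = map (rk A) y2"
        using s1 rk_map[OF A inj] by auto
      have "map (rk (map \<mu> A)) (map \<mu> y1) < map (rk (map \<mu> A)) (map \<mu> y2)"
        using R(3) y1(2) y2(2) unfolding lt_def by (simp only:)
      then have "lt (rk A) y1 y2" unfolding lt_def q1 q2 .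
      then have k: "rk ?D (last y1) \<le> rk ?D (last y2)" using e(3) y1 y2 by (auto simp: CondD_def)
      have l1: "last y1 \<in> set ?D" using isrot_last[OF y1(1)] e(1,5) by auto
      have l2: "last y2 \<in> set ?D" using isrot_last[OF y2(1)] e(1,5) by auto
      have "last R1 = \<mu> (last y1)" using y1 isrot_ne[OF y1(1)] by (simp add: last_map)
      moreover have "last R2 = \<mu> (last y2)" using y2 isrot_ne[OF y2(1)] by (simp add: last_map)
      ultimately show "rk (map \<mu> ?D) (last R1) \<le> rk (map \<mu> ?D) (last R2)"
        using k rk_map[OF e(4) injD l1] rk_map[OF e(4) injD l2] by simp
    qed
  qed
qed

lemma set_alpha: "set (alpha a b w) \<subseteq> set w \<union> {b}"
  by (induction w) auto

lemma set_alpha_tilde: "set (alpha_tilde a b w) \<subseteq> set w \<union> {b}"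
  by (induction w) auto

lemma alpha_first: "isrot w y \<Longrightarrow> \<exists>f t. alpha a b y = f # t \<and> f \<in> set w"
proof -
  assume y: "isrot w y"
  obtain f y' where fy: "y = f # y'" using isrot_ne[OF y] by (cases y) auto
  have "f \<in> set w" using isrot_set[OF y] fy by auto
  moreover have "\<exists>t. alpha a b y = f # t" using fy by simp
  ultimately show ?thesis by blast
qed

lemma part6:
  assumes A: "distinct A" and cl: "clustering A \<pi> w" and aA: "a \<in> set A" and bA: "b \<notin> set A"
  shows "(\<exists>\<pi>'. clustering (A @ [b]) \<pi>' (alpha a b w)) \<and> (\<exists>\<pi>''. clustering (b # A) \<pi>'' (alpha a b w))"
proof -
  define D where "D = map \<pi> A"
  note e = cl_elim[OF A cl, folded D_def]
  define sw where "sw = (\<lambda>c. if c = a then b else c)"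
  have ab: "a \<noteq> b" using aA bA by auto
  have injsw: "inj_on sw (set D)"
    using e(5) bA by (auto simp: sw_def inj_on_def)
  have dsw: "distinct (map sw D)" using e(4) injsw by (simp add: distinct_map)
  have anot: "a \<notin> set (map sw D)" using ab by (auto simp: sw_def)
  have setsw: "set (map sw D) = (set A - {a}) \<union> {b}" using e(5) aA by (auto simp: sw_def)
  have injr: "inj_on (rk A) (set A)" by (meson inj_onI rk_inj)
  have wA: "set w \<subseteq> set A" by (rule e(1))
  have saw: "set (alpha a b w) \<subseteq> set A \<union> {b}" using set_alpha[of a b w] wA by auto
  have rkD: "rk (map sw D) (sw c) = rk D c" if "c \<in> set A" for c
    using rk_map[OF e(4) injsw] that e(5) by simp
  have lenD: "length (map sw D) = length A" by (simp add: D_def)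
  have lastA: "last y \<in> set A" if "isrot w y" for y using isrot_last[OF that] wA by auto
  have rD: "rk D c < length A" if "c \<in> set A" for c
    using rk_less[of c D] that e(5) lenD by simp
  have sw_in: "sw c \<in> set (map sw D)" if "c \<in> set A" for c using that e(5) by simp
  have P1: "\<exists>\<pi>'. clustering (A @ [b]) \<pi>' (alpha a b w)"
  proof (rule cl_intro[of _ "map sw D @ [a]"])
    show "distinct (A @ [b])" using A bA by simp
    show "distinct (map sw D @ [a])" using dsw anot by simp
    show "set (map sw D @ [a]) = set (A @ [b])" using setsw aA by auto
    show "set (alpha a b w) \<subseteq> set (A @ [b])" using saw by auto
    have r'A: "rk (A @ [b]) c = rk A c" if "c \<in> set A" for c using that by (rule rk_append)
    have r'b: "rk (A @ [b]) b = length A" using bA by (simp add: rk_append2 rk_Cons_same)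
    have k'sw: "rk (map sw D @ [a]) (sw c) = rk D c" if "c \<in> set A" for c
      using rk_append[OF sw_in[OF that]] rkD[OF that] by simp
    have k'a: "rk (map sw D @ [a]) a = length A" using anot lenD by (simp add: rk_append2 rk_Cons_same)
    show "CondD (rk (A @ [b])) (rk (map sw D @ [a])) (alpha a b w)"
    proof (rule alpha_general[OF e(3) wA injr])
      show "rk (A @ [b]) d < rk (A @ [b]) e" if "d \<in> set A" "e \<in> set A" "rk A d < rk A e" for d e
        using that r'A by simp
      show "rk (map sw D @ [a]) (if c = a then b else c) \<le> rk (map sw D @ [a]) (if d = a then b else d)"
        if "c \<in> set A" "d \<in> set A" "rk D c \<le> rk D d" for c d
        using that k'sw unfolding sw_def by simp
      show "rk (map sw D @ [a]) (if last y = a then b else last y) \<le> rk (map sw D @ [a]) a"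
        if "isrot w y" for y
        using k'sw[OF lastA[OF that]] rD[OF lastA[OF that]] k'a unfolding sw_def by simp
      show "rk (map sw D @ [a]) a \<le> rk (map sw D @ [a]) (if last y = a then b else last y)"
        if y: "isrot w y" and x: "isrot w (x @ [a])" and l: "lt (rk (A @ [b])) (b # alpha a b x @ [a]) (alpha a b y)" for y x
      proof -
        obtain f t where ft: "alpha a b y = f # t" "f \<in> set w" using alpha_first[OF y] by blast
        have "rk (A @ [b]) f < rk (A @ [b]) b" using ft(2) wA r'A r'b rk_less[of f A] by auto
        then have "lt (rk (A @ [b])) (alpha a b y) (b # alpha a b x @ [a])" using ft(1) by (simp add: lt_Cons)
        then show ?thesis using l lt_asym by blast
      qed
    qed
  qed
  have P2: "\<exists>\<pi>''. clustering (b # A) \<pi>'' (alpha a b w)"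
  proof (rule cl_intro[of _ "a # map sw D"])
    show "distinct (b # A)" using A bA by simp
    show "distinct (a # map sw D)" using dsw anot by simp
    show "set (a # map sw D) = set (b # A)" using setsw aA by auto
    show "set (alpha a b w) \<subseteq> set (b # A)" using saw by auto
    have r'A: "rk (b # A) c = Suc (rk A c)" if "c \<in> set A" for c using that bA
      by (intro rk_Cons_other) auto
    have r'b: "rk (b # A) b = 0" by (rule rk_Cons_same)
    have k'sw: "rk (a # map sw D) (sw c) = Suc (rk D c)" if "c \<in> set A" for c
    proof -
      have "sw c \<noteq> a" using sw_in[OF that] anot by metis
      then show ?thesis using rkD[OF that] by (simp add: rk_Cons_other)
    qed
    have k'a: "rk (a # map sw D) a = 0" by (rule rk_Cons_same)
    show "CondD (rk (b # A)) (rk (a # map sw D)) (alpha a b w)"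
    proof (rule alpha_general[OF e(3) wA injr])
      show "rk (b # A) d < rk (b # A) e" if "d \<in> set A" "e \<in> set A" "rk A d < rk A e" for d e
        using that r'A by simp
      show "rk (a # map sw D) (if c = a then b else c) \<le> rk (a # map sw D) (if d = a then b else d)"
        if "c \<in> set A" "d \<in> set A" "rk D c \<le> rk D d" for c d
        using that k'sw unfolding sw_def by simp
      show "rk (a # map sw D) a \<le> rk (a # map sw D) (if last y = a then b else last y)"
        if "isrot w y" for y
        using k'a by simp
      show "rk (a # map sw D) (if last y = a then b else last y) \<le> rk (a # map sw D) a"
        if y: "isrot w y" and x: "isrot w (x @ [a])" and l: "lt (rk (b # A)) (alpha a b y) (b # alpha a b x @ [a])" for y x
      proof -
        obtain f t where ft: "alpha a b y = f # t" "f \<in> set w" using alpha_first[OF y] by blast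
        have "rk (b # A) b < rk (b # A) f" using ft(2) wA r'A r'b by auto
        then have "lt (rk (b # A)) (b # alpha a b x @ [a]) (alpha a b y)" using ft(1) by (simp add: lt_Cons)
        then show ?thesis using l lt_asym by blast
      qed
    qed
  qed
  show ?thesis using P1 P2 by blast
qed

lemma rk_move_front:
  assumes L: "distinct L" and i: "i < length L" and j: "j < length L"
  shows "rk (L ! i # take i L @ drop (Suc i) L) (L ! j) = (if j = i then 0 else if j < i then Suc j else j)"
proof -
  let ?M = "L ! i # take i L @ drop (Suc i) L"
  have m: "mset ?M = mset L" by (rule move_front[OF i])
  have dM: "distinct ?M" and sM: "set ?M = set L" using mset_distinct_set[OF m L] by auto
  have lM: "length ?M = length L" using m by (metis size_mset)
  show ?thesis
  proof (cases "j = i")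
    case True then show ?thesis by (simp add: rk_Cons_same)
  next
    case False
    show ?thesis
    proof (cases "j < i")
      case True
      have "?M ! Suc j = L ! j" using True i by (simp add: nth_append)
      moreover have "Suc j < length ?M" using True i lM by simp
      ultimately show ?thesis using rk_nth[OF dM, of "Suc j"] True False by simp
    next
      case F2: False
      then have ji: "i < j" using False by simp
      have "?M ! j = L ! j"
      proof -
        obtain k where k: "j = Suc (i + k)" using ji by (metis less_iff_Suc_add)
        have "?M ! j = (take i L @ drop (Suc i) L) ! (i + k)" using k by simp
        also have "\<dots> = drop (Suc i) L ! k" using i by (simp add: nth_append)
        also have "\<dots> = L ! j" using k j by simp
        finally show ?thesis .
      qed
      moreover have "j < length ?M" using j lM by simp
      ultimately show ?thesis using rk_nth[OF dM, of j] ji by simp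
    qed
  qed
qed

lemma rk_move_back:
  assumes L: "distinct L" and i: "i < length L" and j: "j < length L"
  shows "rk (take i L @ drop (Suc i) L @ [L ! i]) (L ! j) = (if j < i then j else if j = i then length L - 1 else j - 1)"
proof -
  let ?M = "take i L @ drop (Suc i) L @ [L ! i]"
  have m: "mset ?M = mset L" by (rule move_back[OF i])
  have dM: "distinct ?M" and sM: "set ?M = set L" using mset_distinct_set[OF m L] by auto
  have lM: "length ?M = length L" using m by (metis size_mset)
  show ?thesis
  proof (cases "j < i")
    case True
    have "?M ! j = L ! j" using True i by (simp add: nth_append)
    moreover have "j < length ?M" using j lM by simp
    ultimately show ?thesis using rk_nth[OF dM, of j] True by simp
  next
    case False
    show ?thesis
    proof (cases "j = i")
      case True
      have e1: "?M = (take i L @ drop (Suc i) L) @ [L ! i]" by simp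
      have "length (take i L @ drop (Suc i) L) = length L - 1" using i by simp
      then have "?M ! (length L - 1) = L ! i" unfolding e1 by (metis nth_append_length)
      moreover have "length L - 1 < length ?M" using i lM by simp
      ultimately show ?thesis using rk_nth[OF dM, of "length L - 1"] True by simp
    next
      case F2: False
      then have ji: "i < j" using False by simp
      obtain k where k: "j = Suc (i + k)" using ji by (metis less_iff_Suc_add)
      have "?M ! (j - 1) = L ! j"
      proof -
        have "?M ! (j - 1) = ?M ! (i + k)" using k by simp
        also have "\<dots> = (drop (Suc i) L @ [L ! i]) ! k" using i by (simp add: nth_append)
        also have "\<dots> = drop (Suc i) L ! k"
        proof -
          have "k < length (drop (Suc i) L)" using k j by simp
          then show ?thesis by (simp add: nth_append)
        qed
        also have "\<dots> = L ! j" using k j by simp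
        finally show ?thesis .
      qed
      moreover have "j - 1 < length ?M" using j lM by simp
      ultimately show ?thesis using rk_nth[OF dM, of "j - 1"] ji False by simp
    qed
  qed
qed

lemma part2:
  assumes A: "distinct A" and cl: "clustering A \<pi> w" and aA: "a \<in> set A" and b0: "b = A ! 0"
    and il: "i + 1 < length A" and ia: "inv \<pi> a = A ! i" and ib: "inv \<pi> b = A ! (i + 1)" and ab: "a \<noteq> b"
  shows "\<exists>\<pi>'. clustering A \<pi>' (alpha a b w)"
proof -
  define D where "D = map \<pi> A"
  note e = cl_elim[OF A cl, folded D_def]
  have p: "\<pi> permutes set A" by (rule e(2))
  have lenD: "length D = length A" by (simp add: D_def)
  have Di: "D ! i = a" using il ia permutes_inverses(1)[OF p, of a] by (simp add: D_def)
  have Di1: "D ! Suc i = b" using il ib permutes_inverses(1)[OF p, of b] by (simp add: D_def)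
  define D' where "D' = D ! i # take i D @ drop (Suc i) D"
  have mD': "mset D' = mset D" unfolding D'_def by (rule move_front) (use il lenD in simp)
  have dD': "distinct D'" and sD': "set D' = set D" using mset_distinct_set[OF mD' e(4)] by auto
  have rka: "rk D a = i" using rk_nth[OF e(4), of i] Di il lenD by simp
  have rkb: "rk D b = Suc i" using rk_nth[OF e(4), of "Suc i"] Di1 il lenD by simp
  have hform: "rk D' (if c = a then b else c) = (if rk D c \<le> i then Suc (rk D c) else rk D c)"
    if c: "c \<in> set A" for c
  proof -
    let ?j = "rk D c"
    have cD: "c \<in> set D" using c e(5) by simp
    have j: "?j < length D" "D ! ?j = c" using rk_less[OF cD] nth_rk[OF cD] by auto
    show ?thesis
    proof (cases "c = a")
      case True
      have "rk D' (D ! Suc i) = Suc i" unfolding D'_def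
        using rk_move_front[OF e(4), of i "Suc i"] il lenD by simp
      then show ?thesis using True Di1 rka by simp
    next
      case False
      then have "?j \<noteq> i" using j Di by metis
      then have "rk D' (D ! ?j) = (if ?j < i then Suc ?j else ?j)" unfolding D'_def
        using rk_move_front[OF e(4), of i ?j] il lenD j by simp
      then show ?thesis using False j \<open>?j \<noteq> i\<close> by auto
    qed
  qed
  have rk'a: "rk D' a = 0" unfolding D'_def using Di by (simp add: rk_Cons_same)
  have wA: "set w \<subseteq> set A" by (rule e(1))
  have injr: "inj_on (rk A) (set A)" by (meson inj_onI rk_inj)
  have "0 < length A" using il by linarith
  then have bA: "b \<in> set A" unfolding b0 by (rule nth_mem)
  have Ane: "A \<noteq> []" using il by (cases A) auto
  have rkA0: "rk A b = 0" using rk_nth[OF A, of 0] b0 Ane by simp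
  have bmin: "rk A b < rk A c" if "c \<in> set A" "c \<noteq> b" for c
  proof -
    have "rk A c \<noteq> 0" using nth_rk[OF that(1)] that(2) b0 by metis
    then show ?thesis using rkA0 by simp
  qed
  have kab: "rk D a < rk D b" using rka rkb by simp
  show ?thesis
  proof (rule cl_intro[OF A dD'])
    show "set D' = set A" using sD' e(5) by simp
    show "set (alpha a b w) \<subseteq> set A" using set_alpha[of a b w] wA bA by auto
    show "CondD (rk A) (rk D') (alpha a b w)"
    proof (rule alpha_general[OF e(3) wA injr])
      show "rk A d < rk A e" if "d \<in> set A" "e \<in> set A" "rk A d < rk A e" for d e
        using that by simp
      show "rk D' (if c = a then b else c) \<le> rk D' (if d = a then b else d)"
        if "c \<in> set A" "d \<in> set A" "rk D c \<le> rk D d" for c d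
        using hform[OF that(1)] hform[OF that(2)] that(3) by (simp; arith)
      show "rk D' (if last y = a then b else last y) \<le> rk D' a"
        if y: "isrot w y" and x: "isrot w (x @ [a])" and l: "lt (rk A) (alpha a b y) (b # alpha a b x @ [a])" for y x
      proof -
        have "lt (rk A) (b # alpha a b x @ [a]) (alpha a b y)"
          by (rule alpha_min_lt[OF e(3) wA injr bmin aA kab ab y x])
        then show ?thesis using l lt_asym by metis
      qed
      show "rk D' a \<le> rk D' (if last y = a then b else last y)" for y using rk'a by simp
    qed
  qed
qed

lemma part3:
  assumes A: "distinct A" and cl: "clustering A \<pi> w" and aA: "a \<in> set A" and bl: "b = A ! (length A - 1)"
    and il: "i + 1 < length A" and ib: "inv \<pi> b = A ! i" and ia: "inv \<pi> a = A ! (i + 1)" and ab: "a \<noteq> b"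
  shows "\<exists>\<pi>'. clustering A \<pi>' (alpha a b w)"
proof -
  define D where "D = map \<pi> A"
  note e = cl_elim[OF A cl, folded D_def]
  have p: "\<pi> permutes set A" by (rule e(2))
  have lenD: "length D = length A" by (simp add: D_def)
  have Di: "D ! i = b" using il ib permutes_inverses(1)[OF p, of b] by (simp add: D_def)
  have Di1: "D ! Suc i = a" using il ia permutes_inverses(1)[OF p, of a] by (simp add: D_def)
  define D' where "D' = take (Suc i) D @ drop (Suc (Suc i)) D @ [D ! Suc i]"
  have mD': "mset D' = mset D" unfolding D'_def by (rule move_back) (use il lenD in simp)
  have dD': "distinct D'" and sD': "set D' = set D" using mset_distinct_set[OF mD' e(4)] by auto
  have rkb: "rk D b = i" using rk_nth[OF e(4), of i] Di il lenD by simp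
  have rka: "rk D a = Suc i" using rk_nth[OF e(4), of "Suc i"] Di1 il lenD by simp
  have hform: "rk D' (if c = a then b else c) = (if rk D c \<le> i then rk D c else rk D c - 1)"
    if c: "c \<in> set A" for c
  proof -
    let ?j = "rk D c"
    have cD: "c \<in> set D" using c e(5) by simp
    have j: "?j < length D" "D ! ?j = c" using rk_less[OF cD] nth_rk[OF cD] by auto
    show ?thesis
    proof (cases "c = a")
      case True
      have "rk D' (D ! i) = i" unfolding D'_def
        using rk_move_back[OF e(4), of "Suc i" i] il lenD by simp
      then show ?thesis using True Di rka by simp
    next
      case False
      then have "?j \<noteq> Suc i" using j Di1 by metis
      then have "rk D' (D ! ?j) = (if ?j < Suc i then ?j else ?j - 1)" unfolding D'_def
        using rk_move_back[OF e(4), of "Suc i" ?j] il lenD j by simp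
      then show ?thesis using False j \<open>?j \<noteq> Suc i\<close> by auto
    qed
  qed
  have rk'a: "rk D' a = length A - 1" unfolding D'_def
    using rk_move_back[OF e(4), of "Suc i" "Suc i"] il lenD Di1 by simp
  have wA: "set w \<subseteq> set A" by (rule e(1))
  have injr: "inj_on (rk A) (set A)" by (meson inj_onI rk_inj)
  have bA: "b \<in> set A" using bl il nth_mem[of "length A - 1" A] by simp
  have rkAl: "rk A b = length A - 1" using rk_nth[OF A, of "length A - 1"] bl il by simp
  have bmax: "rk A c < rk A b" if "c \<in> set A" "c \<noteq> b" for c
  proof -
    have "rk A c \<noteq> length A - 1" using nth_rk[OF that(1)] that(2) bl by metis
    moreover have "rk A c < length A" by (rule rk_less[OF that(1)])
    ultimately show ?thesis using rkAl by simp
  qed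
  have kab: "rk D b < rk D a" using rka rkb by simp
  show ?thesis
  proof (rule cl_intro[OF A dD'])
    show "set D' = set A" using sD' e(5) by simp
    show "set (alpha a b w) \<subseteq> set A" using set_alpha[of a b w] wA bA by auto
    show "CondD (rk A) (rk D') (alpha a b w)"
    proof (rule alpha_general[OF e(3) wA injr])
      show "rk A d < rk A e" if "d \<in> set A" "e \<in> set A" "rk A d < rk A e" for d e
        using that by simp
      show "rk D' (if c = a then b else c) \<le> rk D' (if d = a then b else d)"
        if "c \<in> set A" "d \<in> set A" "rk D c \<le> rk D d" for c d
        using hform[OF that(1)] hform[OF that(2)] that(3) by (simp; arith)
      show "rk D' a \<le> rk D' (if last y = a then b else last y)"
        if y: "isrot w y" and x: "isrot w (x @ [a])" and l: "lt (rk A) (b # alpha a b x @ [a]) (alpha a b y)" for y x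
      proof -
        have "lt (rk A) (alpha a b y) (b # alpha a b x @ [a])"
          by (rule alpha_max_lt[OF e(3) wA injr bmax aA kab ab y x])
        then show ?thesis using l lt_asym by metis
      qed
      show "rk D' (if last y = a then b else last y) \<le> rk D' a" if y: "isrot w y" for y
      proof -
        have "last y \<in> set A" using isrot_last[OF y] wA by auto
        then have "(if last y = a then b else last y) \<in> set D'" using bA sD' e(5) by simp
        then have "rk D' (if last y = a then b else last y) < length D'" by (rule rk_less)
        moreover have "length D' = length A" using mD' lenD by (metis size_mset)
        ultimately show ?thesis using rk'a by simp
      qed
    qed
  qed
qed

lemma at_first:
  assumes y: "isrot w y" and ab: "a \<noteq> b"
  shows "\<exists>g t. alpha_tilde a b y = g # t \<and> g \<noteq> a \<and> g \<in> set w \<union> {b}"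
proof -
  obtain f y' where fy: "y = f # y'" using isrot_ne[OF y] by (cases y) auto
  have "f \<in> set w" using isrot_set[OF y] fy by auto
  moreover obtain g t where "alpha_tilde a b (f # y') = g # t" "g = f \<or> g = b" "g \<noteq> a"
    using at_hd[of a b f y'] ab by blast
  ultimately show ?thesis using fy by blast
qed

lemma part4:
  assumes A: "distinct A" and cl: "clustering A \<pi> w" and b0: "inv \<pi> b = A ! 0"
    and il: "i + 1 < length A" and ai: "a = A ! i" and bi: "b = A ! (i + 1)"
  shows "\<exists>\<pi>'. clustering (A ! i # take i A @ drop (i + 1) A) \<pi>' (alpha_tilde a b w)"
proof -
  define D where "D = map \<pi> A"
  note e = cl_elim[OF A cl, folded D_def]
  have p: "\<pi> permutes set A" by (rule e(2))
  have lenD: "length D = length A" by (simp add: D_def)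
  have Ane: "A \<noteq> []" using il by (cases A) auto
  have D0: "D ! 0 = b" using Ane b0 permutes_inverses(1)[OF p, of b] by (simp add: D_def)
  have rkDb: "rk D b = 0" using rk_nth[OF e(4), of 0] D0 Ane lenD by simp
  define C' where "C' = A ! i # take i A @ drop (Suc i) A"
  have Ceq: "A ! i # take i A @ drop (i + 1) A = C'" by (simp add: C'_def)
  have mC: "mset C' = mset A" unfolding C'_def by (rule move_front) (use il in simp)
  have dC: "distinct C'" and sC: "set C' = set A" using mset_distinct_set[OF mC A] by auto
  have il': "i < length A" "Suc i < length A" using il by auto
  have ab: "a \<noteq> b" using ai bi A il' nth_eq_iff_index_eq by fastforce
  have aA: "a \<in> set A" and bA: "b \<in> set A" using ai bi il' by auto
  have rka: "rk A a = i" using rk_nth[OF A il'(1)] ai by simp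
  have rkb: "rk A b = Suc i" using rk_nth[OF A il'(2)] bi by simp
  have r'form: "rk C' d = (if rk A d = i then 0 else if rk A d < i then Suc (rk A d) else rk A d)"
    if d: "d \<in> set A" for d
    using rk_move_front[OF A il'(1) rk_less[OF d]] nth_rk[OF d] unfolding C'_def by simp
  have isa: "d = a \<longleftrightarrow> rk A d = i" if d: "d \<in> set A" for d
    using rka rk_inj[OF d aA] by auto
  have isb: "d = b \<longleftrightarrow> rk A d = Suc i" if d: "d \<in> set A" for d
    using rkb rk_inj[OF d bA] by auto
  have wA: "set w \<subseteq> set A" by (rule e(1))
  have injr: "inj_on (rk A) (set A)" by (meson inj_onI rk_inj)
  have r'pos: "0 < rk C' g" if "g \<in> set A" "g \<noteq> a" for g
    using r'form[OF that(1)] isa[OF that(1)] that(2) by simp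
  have r'a: "rk C' a = 0" using r'form[OF aA] rka by simp
  have "\<exists>\<pi>'. clustering C' \<pi>' (alpha_tilde a b w)"
  proof (rule cl_intro[OF dC e(4)])
    show "set D = set C'" using sC e(5) by simp
    show "set (alpha_tilde a b w) \<subseteq> set C'" using set_alpha_tilde[of a b w] wA bA sC by auto
    show "CondD (rk C') (rk D) (alpha_tilde a b w)"
    proof (rule at_general[OF e(3) wA injr])
      show "lt (rk C') (alpha_tilde a b x) (alpha_tilde a b y)"
        if x: "isrot w x" and y: "isrot w y" and l: "lt (rk A) x y" for x y
      proof (rule at_mono[OF wA injr aA bA ab _ _ _ _ x y l])
        show "rk C' d < rk C' e" if "d \<in> set A" "e \<in> set A" "d \<noteq> a" "e \<noteq> a" "rk A d < rk A e" for d e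
          using r'form[OF that(1)] r'form[OF that(2)] isa[OF that(1)] isa[OF that(2)] that(3-5) by simp
        show "rk C' b < rk C' e" if "e \<in> set A" "e \<noteq> a" "e \<noteq> b" "rk A a < rk A e" for e
          using r'form[OF that(1)] r'form[OF bA] isa[OF that(1)] isb[OF that(1)] that(2-4) rka rkb by simp
        show "rk C' d < rk C' b" if "d \<in> set A" "d \<noteq> a" "d \<noteq> b" "rk A d < rk A a" for d
          using r'form[OF that(1)] r'form[OF bA] isa[OF that(1)] isb[OF that(1)] that(2-4) rka rkb by simp
        show "(rk A a < rk A b \<and> (\<forall>g\<in>set A. g \<noteq> a \<longrightarrow> rk C' a < rk C' g)) \<or>
              (rk A b < rk A a \<and> (\<forall>g\<in>set A. g \<noteq> a \<longrightarrow> rk C' g < rk C' a))"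
          using rka rkb r'pos r'a by simp
      qed
      show "rk D c \<le> rk D d" if "c \<in> set A" "d \<in> set A" "rk D c \<le> rk D d" for c d
        using that by simp
      show "rk D (last y) \<le> rk D b"
        if y: "isrot w y" and x: "isrot w (x @ [a])" and l: "lt (rk C') (alpha_tilde a b y) (a # alpha_tilde a b x @ [b])" for y x
      proof -
        obtain g t where gt: "alpha_tilde a b y = g # t" "g \<noteq> a" "g \<in> set w \<union> {b}"
          using at_first[OF y ab] by blast
        have "g \<in> set A" using gt(3) wA bA by auto
        then have "rk C' a < rk C' g" using r'pos gt(2) r'a by simp
        then have "lt (rk C') (a # alpha_tilde a b x @ [b]) (alpha_tilde a b y)" using gt(1) by (simp add: lt_Cons)
        then show ?thesis using l lt_asym by metis
      qed
      show "rk D b \<le> rk D (last y)" for y using rkDb by simp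
    qed
  qed
  then show ?thesis using Ceq by simp
qed

lemma part5:
  assumes A: "distinct A" and cl: "clustering A \<pi> w" and b0: "inv \<pi> b = A ! (length A - 1)"
    and il: "i + 1 < length A" and bi: "b = A ! i" and ai: "a = A ! (i + 1)"
  shows "\<exists>\<pi>'. clustering (take (i + 1) A @ drop (i + 2) A @ [A ! (i + 1)]) \<pi>' (alpha_tilde a b w)"
proof -
  define D where "D = map \<pi> A"
  note e = cl_elim[OF A cl, folded D_def]
  have p: "\<pi> permutes set A" by (rule e(2))
  have lenD: "length D = length A" by (simp add: D_def)
  have Ane: "A \<noteq> []" using il by (cases A) auto
  have nl: "length A - 1 < length A" using Ane by simp
  have D0: "D ! (length A - 1) = b" using nl b0 permutes_inverses(1)[OF p, of b] by (simp add: D_def)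
  have rkDb: "rk D b = length A - 1" using rk_nth[OF e(4), of "length A - 1"] D0 nl lenD by simp
  define C' where "C' = take (Suc i) A @ drop (Suc (Suc i)) A @ [A ! Suc i]"
  have Ceq: "take (i + 1) A @ drop (i + 2) A @ [A ! (i + 1)] = C'" by (simp add: C'_def)
  have il': "i < length A" "Suc i < length A" using il by auto
  have mC: "mset C' = mset A" unfolding C'_def by (rule move_back[OF il'(2)])
  have dC: "distinct C'" and sC: "set C' = set A" using mset_distinct_set[OF mC A] by auto
  have ab: "a \<noteq> b" using ai bi A il' nth_eq_iff_index_eq by fastforce
  have aA: "a \<in> set A" and bA: "b \<in> set A" using ai bi il' by auto
  have rkb: "rk A b = i" using rk_nth[OF A il'(1)] bi by simp
  have rka: "rk A a = Suc i" using rk_nth[OF A il'(2)] ai by simp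
  have r'form: "rk C' d = (if rk A d < Suc i then rk A d else if rk A d = Suc i then length A - 1 else rk A d - 1)"
    if d: "d \<in> set A" for d
    using rk_move_back[OF A il'(2) rk_less[OF d]] nth_rk[OF d] unfolding C'_def by simp
  have isa: "d = a \<longleftrightarrow> rk A d = Suc i" if d: "d \<in> set A" for d
    using rka rk_inj[OF d aA] by auto
  have isb: "d = b \<longleftrightarrow> rk A d = i" if d: "d \<in> set A" for d
    using rkb rk_inj[OF d bA] by auto
  have rkl: "rk A d < length A" if "d \<in> set A" for d using rk_less[OF that] .
  have wA: "set w \<subseteq> set A" by (rule e(1))
  have injr: "inj_on (rk A) (set A)" by (meson inj_onI rk_inj)
  have r'a: "rk C' a = length A - 1" using r'form[OF aA] rka by simp
  have r'lt: "rk C' g < rk C' a" if "g \<in> set A" "g \<noteq> a" for g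
    using r'form[OF that(1)] isa[OF that(1)] that(2) r'a rkl[OF that(1)] il by auto
  have "\<exists>\<pi>'. clustering C' \<pi>' (alpha_tilde a b w)"
  proof (rule cl_intro[OF dC e(4)])
    show "set D = set C'" using sC e(5) by simp
    show "set (alpha_tilde a b w) \<subseteq> set C'" using set_alpha_tilde[of a b w] wA bA sC by auto
    show "CondD (rk C') (rk D) (alpha_tilde a b w)"
    proof (rule at_general[OF e(3) wA injr])
      show "lt (rk C') (alpha_tilde a b x) (alpha_tilde a b y)"
        if x: "isrot w x" and y: "isrot w y" and l: "lt (rk A) x y" for x y
      proof (rule at_mono[OF wA injr aA bA ab _ _ _ _ x y l])
        show "rk C' d < rk C' e" if "d \<in> set A" "e \<in> set A" "d \<noteq> a" "e \<noteq> a" "rk A d < rk A e" for d e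
          using r'form[OF that(1)] r'form[OF that(2)] isa[OF that(1)] isa[OF that(2)] that(3-5) by auto
        show "rk C' b < rk C' e" if "e \<in> set A" "e \<noteq> a" "e \<noteq> b" "rk A a < rk A e" for e
          using r'form[OF that(1)] r'form[OF bA] isa[OF that(1)] isb[OF that(1)] that(2-4) rka rkb by auto
        show "rk C' d < rk C' b" if "d \<in> set A" "d \<noteq> a" "d \<noteq> b" "rk A d < rk A a" for d
          using r'form[OF that(1)] r'form[OF bA] isa[OF that(1)] isb[OF that(1)] that(2-4) rka rkb by auto
        show "(rk A a < rk A b \<and> (\<forall>g\<in>set A. g \<noteq> a \<longrightarrow> rk C' a < rk C' g)) \<or>
              (rk A b < rk A a \<and> (\<forall>g\<in>set A. g \<noteq> a \<longrightarrow> rk C' g < rk C' a))"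
          using rka rkb r'lt by simp
      qed
      show "rk D c \<le> rk D d" if "c \<in> set A" "d \<in> set A" "rk D c \<le> rk D d" for c d
        using that by simp
      show "rk D b \<le> rk D (last y)"
        if y: "isrot w y" and x: "isrot w (x @ [a])" and l: "lt (rk C') (a # alpha_tilde a b x @ [b]) (alpha_tilde a b y)" for y x
      proof -
        obtain g t where gt: "alpha_tilde a b y = g # t" "g \<noteq> a" "g \<in> set w \<union> {b}"
          using at_first[OF y ab] by blast
        have "g \<in> set A" using gt(3) wA bA by auto
        then have "rk C' g < rk C' a" using r'lt gt(2) by simp
        then have "lt (rk C') (alpha_tilde a b y) (a # alpha_tilde a b x @ [b])" using gt(1) by (simp add: lt_Cons)
        then show ?thesis using l lt_asym by metis
      qed
      show "rk D (last y) \<le> rk D b" if y: "isrot w y" for y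
      proof -
        have "last y \<in> set D" using isrot_last[OF y] wA e(5) by auto
        then have "rk D (last y) < length D" by (rule rk_less)
        then show ?thesis using rkDb lenD by simp
      qed
    qed
  qed
  then show ?thesis using Ceq by simp
qed

theorem lemma6p5:
  fixes A :: "'a list" and w :: "'a list" and \<pi> :: "'a \<Rightarrow> 'a" and a b :: 'a
  assumes "distinct A" and "primitive w" and "clustering A \<pi> w" and "a \<noteq> b"
  shows
   "(\<forall>\<mu>. \<mu> permutes set A \<longrightarrow> (\<exists>\<pi>'. clustering (map \<mu> A) \<pi>' (map \<mu> w)))
  \<and> (\<forall>i. a \<in> set A \<and> b = A ! 0 \<and> i + 1 < length A \<and> inv \<pi> a = A ! i \<and> inv \<pi> b = A ! (i + 1)
        \<longrightarrow> (\<exists>\<pi>'. clustering A \<pi>' (alpha a b w)))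
  \<and> (\<forall>i. a \<in> set A \<and> b = A ! (length A - 1) \<and> i + 1 < length A \<and> inv \<pi> b = A ! i \<and> inv \<pi> a = A ! (i + 1)
        \<longrightarrow> (\<exists>\<pi>'. clustering A \<pi>' (alpha a b w)))
  \<and> (\<forall>i. inv \<pi> b = A ! 0 \<and> i + 1 < length A \<and> a = A ! i \<and> b = A ! (i + 1)
        \<longrightarrow> (\<exists>\<pi>'. clustering (A ! i # take i A @ drop (i + 1) A) \<pi>' (alpha_tilde a b w)))
  \<and> (\<forall>i. inv \<pi> b = A ! (length A - 1) \<and> i + 1 < length A \<and> b = A ! i \<and> a = A ! (i + 1)
        \<longrightarrow> (\<exists>\<pi>'. clustering (take (i + 1) A @ drop (i + 2) A @ [A ! (i + 1)]) \<pi>' (alpha_tilde a b w)))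
  \<and> (a \<in> set A \<and> b \<notin> set A \<longrightarrow>
        (\<exists>\<pi>'. clustering (A @ [b]) \<pi>' (alpha a b w)) \<and> (\<exists>\<pi>''. clustering (b # A) \<pi>'' (alpha a b w)))
  \<and> (\<forall>B. distinct B \<and> set B \<inter> set A = {} \<longrightarrow> (\<exists>\<pi>'. clustering (A @ B) \<pi>' w))"
proof (intro conjI allI impI)
  note A = assms(1) and cl = assms(3) and ab = assms(4)
  show "\<exists>\<pi>'. clustering (map \<mu> A) \<pi>' (map \<mu> w)" if "\<mu> permutes set A" for \<mu>
    using part1[OF A cl that] .
  show "\<exists>\<pi>'. clustering A \<pi>' (alpha a b w)"
    if "a \<in> set A \<and> b = A ! 0 \<and> i + 1 < length A \<and> inv \<pi> a = A ! i \<and> inv \<pi> b = A ! (i + 1)" for i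
    using part2[OF A cl _ _ _ _ _ ab] that by blast
  show "\<exists>\<pi>'. clustering A \<pi>' (alpha a b w)"
    if "a \<in> set A \<and> b = A ! (length A - 1) \<and> i + 1 < length A \<and> inv \<pi> b = A ! i \<and> inv \<pi> a = A ! (i + 1)" for i
    using part3[OF A cl _ _ _ _ _ ab] that by blast
  show "\<exists>\<pi>'. clustering (A ! i # take i A @ drop (i + 1) A) \<pi>' (alpha_tilde a b w)"
    if "inv \<pi> b = A ! 0 \<and> i + 1 < length A \<and> a = A ! i \<and> b = A ! (i + 1)" for i
    using part4[OF A cl] that by blast
  show "\<exists>\<pi>'. clustering (take (i + 1) A @ drop (i + 2) A @ [A ! (i + 1)]) \<pi>' (alpha_tilde a b w)"
    if "inv \<pi> b = A ! (length A - 1) \<and> i + 1 < length A \<and> b = A ! i \<and> a = A ! (i + 1)" for i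
    using part5[OF A cl] that by blast
  show "\<exists>\<pi>'. clustering (A @ [b]) \<pi>' (alpha a b w)" if "a \<in> set A \<and> b \<notin> set A"
    using part6[OF A cl] that by blast
  show "\<exists>\<pi>''. clustering (b # A) \<pi>'' (alpha a b w)" if "a \<in> set A \<and> b \<notin> set A"
    using part6[OF A cl] that by blast
  show "\<exists>\<pi>'. clustering (A @ B) \<pi>' w" if "distinct B \<and> set B \<inter> set A = {}" for B
    using part7[OF A cl] that by blast
qed


end
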